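(* Let $n\ge1$, $s\in(0,1)$, $\Omega\subset\mathbb{R}^n$ open bounded with Lipschitz boundary, $K$ a measurable symmetric kernel with $\frac{c\,\chi_{[0,\varrho)}(|x-z|)}{|x-z|^{n+2s}}\le K(x,z)\le\frac{C}{|x-z|^{n+2s}}$ for some $c,C>0$, $\varrho\in(0,+\infty]$. Let $h:\mathbb{R}\to\mathbb{R}$ be continuous, odd and strictly increasing, $\mathcal H(t):=\int_0^th(\tau)d\tau$, $\eta\in L^\infty(\Omega)$ with $\eta\ge0$, $\zeta\in L^2(\Omega)$, and let $J:H^s_0(\Omega)\to\mathbb{R}\cup\{+\infty\}$ be $$J(u)=\frac14\iint_{\mathbb{R}^n\times\mathbb{R}^n}|u(x)-u(z)|^2K(x,z)\,dx\,dz+\int_\Omega\eta\,\mathcal H(u)\,dx-\int_\Omega\zeta u\,dx\quad\text{if }\eta\,(\mathcal H\circ u)\in L^1(\Omega),$$ and $J(u)=+\infty$ otherwise. Then $J$ is weakly lower semicontinuous in $H^s_0(\Omega)$: for every sequence $u_k\in H^s_0(\Omega)$ converging weakly in $H^s_0(\Omega)$ to $u$, $\liminf_{k\to+\infty}J(u_k)\ge J(u)$.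
   Context: $H^s_0(\Omega)=\{u\in H^s(\mathbb{R}^n):u=0\text{ a.e. outside }\Omega\}$, normed by $[u]_s=\left(c_{n,s}\iint\frac{|u(x)-u(y)|^2}{|x-y|^{n+2s}}dx\,dy\right)^{1/2}$ with $c_{n,s}=\frac{2^{2s}\Gamma\left(\frac{n+2s}{2}\right)}{\pi^{n/2}\Gamma(2-s)}s(1-s)$. *)

theory Defs
  imports "HOL-Analysis.Analysis"
begin

definition lipschitz_boundary :: "(real ^ 'n) set \<Rightarrow> bool" where
  "lipschitz_boundary \<Omega> \<longleftrightarrow>
    (\<forall>x0 \<in> frontier \<Omega>. \<exists>r > 0. \<exists>e :: real ^ 'n. \<exists>g :: real ^ 'n \<Rightarrow> real. \<exists>L.
        norm e = 1 \<and> L-lipschitz_on {y. y \<bullet> e = 0} g \<and>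
        ball x0 r \<inter> \<Omega> = {x \<in> ball x0 r. x \<bullet> e > g (x - (x \<bullet> e) *\<^sub>R e)})"

definition cns :: "nat \<Rightarrow> real \<Rightarrow> real" where
  "cns n s = 2 powr (2 * s) * Gamma ((real n + 2 * s) / 2)
              / (pi powr (real n / 2) * Gamma (2 - s)) * s * (1 - s)"

definition Hs0 :: "real \<Rightarrow> (real ^ 'n) set \<Rightarrow> (real ^ 'n \<Rightarrow> real) set" where
  "Hs0 s \<Omega> = {u. u \<in> borel_measurable lborel
      \<and> integrable lborel (\<lambda>x. (u x)\<^sup>2)
      \<and> integrable (lborel \<Otimes>\<^sub>M lborel)
          (\<lambda>(x, y). (u x - u y)\<^sup>2 / dist x y powr (real CARD('n) + 2 * s))
      \<and> (AE x in lborel. x \<notin> \<Omega> \<longrightarrow> u x = 0)}"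

definition hs_inner :: "real \<Rightarrow> (real ^ 'n \<Rightarrow> real) \<Rightarrow> (real ^ 'n \<Rightarrow> real) \<Rightarrow> real" where
  "hs_inner s u v = cns CARD('n) s *
     integral\<^sup>L (lborel \<Otimes>\<^sub>M lborel)
       (\<lambda>(x, y). (u x - u y) * (v x - v y) / dist x y powr (real CARD('n) + 2 * s))"

definition weak_conv_Hs0 ::
  "real \<Rightarrow> (real ^ 'n) set \<Rightarrow> (nat \<Rightarrow> real ^ 'n \<Rightarrow> real) \<Rightarrow> (real ^ 'n \<Rightarrow> real) \<Rightarrow> bool" where
  "weak_conv_Hs0 s \<Omega> uk u \<longleftrightarrow>
     (\<forall>k. uk k \<in> Hs0 s \<Omega>) \<and> u \<in> Hs0 s \<Omega> \<and>
     (\<forall>v \<in> Hs0 s \<Omega>. (\<lambda>k. hs_inner s (uk k) v) \<longlonglongrightarrow> hs_inner s u v)"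

text \<open>H(t) = integral from 0 to t of h (oriented).\<close>
definition primH :: "(real \<Rightarrow> real) \<Rightarrow> real \<Rightarrow> real" where
  "primH h t = interval_lebesgue_integral lborel 0 (ereal t) h"

definition Jfun ::
  "(real ^ 'n) set \<Rightarrow> (real ^ 'n \<Rightarrow> real ^ 'n \<Rightarrow> real) \<Rightarrow> (real \<Rightarrow> real)
   \<Rightarrow> (real ^ 'n \<Rightarrow> real) \<Rightarrow> (real ^ 'n \<Rightarrow> real) \<Rightarrow> (real ^ 'n \<Rightarrow> real) \<Rightarrow> ereal" where
  "Jfun \<Omega> K h \<eta> \<zeta> u =
     (if set_integrable lebesgue \<Omega> (\<lambda>x. \<eta> x * primH h (u x))
      then ereal (1/4 * integral\<^sup>L (lborel \<Otimes>\<^sub>M lborel) (\<lambda>(x, z). \<bar>u x - u z\<bar>\<^sup>2 * K x z)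
                 + set_lebesgue_integral lebesgue \<Omega> (\<lambda>x. \<eta> x * primH h (u x))
                 - set_lebesgue_integral lebesgue \<Omega> (\<lambda>x. \<zeta> x * u x))
      else \<infinity>)"

end

theory Submission
  imports Defs
begin


definition gw :: "real \<Rightarrow> real^'n \<Rightarrow> real^'n \<Rightarrow> real" where
  "gw s x y = 1 / dist x y powr (real CARD('n) + 2 * s)"

lemma gw_nonneg: "0 \<le> gw s x y" by (simp add: gw_def)

lemma gw_meas[measurable]: "(\<lambda>(x,y). gw s x y) \<in> borel_measurable (lborel \<Otimes>\<^sub>M lborel)"
  unfolding gw_def by measurable

lemma gw_meas'[measurable]: "(\<lambda>x. gw s (fst x) (snd x)) \<in> borel_measurable (lborel \<Otimes>\<^sub>M lborel)"
  unfolding gw_def by measurable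

lemma Hs0_alt: "f \<in> Hs0 s \<Omega> \<longleftrightarrow> f \<in> borel_measurable lborel
      \<and> integrable lborel (\<lambda>x. (f x)\<^sup>2)
      \<and> integrable (lborel \<Otimes>\<^sub>M lborel) (\<lambda>(x, y). (f x - f y)\<^sup>2 * gw s x y)
      \<and> (AE x in lborel. x \<notin> \<Omega> \<longrightarrow> f x = 0)"
  unfolding Hs0_def gw_def by (simp add: divide_inverse)

lemma Hs0_add:
  assumes "f \<in> Hs0 s \<Omega>" "g \<in> Hs0 s \<Omega>"
  shows "(\<lambda>x. f x + g x) \<in> Hs0 s \<Omega>"
proof -
  have f: "f \<in> borel_measurable lborel" "integrable lborel (\<lambda>x. (f x)\<^sup>2)"
      "integrable (lborel \<Otimes>\<^sub>M lborel) (\<lambda>(x, y). (f x - f y)\<^sup>2 * gw s x y)"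
      "AE x in lborel. x \<notin> \<Omega> \<longrightarrow> f x = 0"
    using assms(1) unfolding Hs0_alt by auto
  have g: "g \<in> borel_measurable lborel" "integrable lborel (\<lambda>x. (g x)\<^sup>2)"
      "integrable (lborel \<Otimes>\<^sub>M lborel) (\<lambda>(x, y). (g x - g y)\<^sup>2 * gw s x y)"
      "AE x in lborel. x \<notin> \<Omega> \<longrightarrow> g x = 0"
    using assms(2) unfolding Hs0_alt by auto
  have ineq: "(a + b)\<^sup>2 \<le> 2 * a\<^sup>2 + 2 * b\<^sup>2" for a b :: real
    using zero_le_power2[of "a - b"] power2_sum[of a b] power2_diff[of a b] by linarith
  have i1: "integrable lborel (\<lambda>x. (f x + g x)\<^sup>2)"
  proof (rule Bochner_Integration.integrable_bound[where f="\<lambda>x. 2 * (f x)\<^sup>2 + 2 * (g x)\<^sup>2"])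
    show "integrable lborel (\<lambda>x. 2 * (f x)\<^sup>2 + 2 * (g x)\<^sup>2)" using f g by auto
    show "(\<lambda>x. (f x + g x)\<^sup>2) \<in> borel_measurable lborel" using f g by measurable
    show "AE x in lborel. norm ((f x + g x)\<^sup>2) \<le> norm (2 * (f x)\<^sup>2 + 2 * (g x)\<^sup>2)"
      using ineq by auto
  qed
  have i2: "integrable (lborel \<Otimes>\<^sub>M lborel) (\<lambda>(x, y). ((f x + g x) - (f y + g y))\<^sup>2 * gw s x y)"
  proof (rule Bochner_Integration.integrable_bound[where f="\<lambda>(x,y). 2 * ((f x - f y)\<^sup>2 * gw s x y) + 2 * ((g x - g y)\<^sup>2 * gw s x y)"])
    show "integrable (lborel \<Otimes>\<^sub>M lborel) (\<lambda>(x,y). 2 * ((f x - f y)\<^sup>2 * gw s x y) + 2 * ((g x - g y)\<^sup>2 * gw s x y))"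
      using f(3) g(3) unfolding case_prod_beta by (intro Bochner_Integration.integrable_add Bochner_Integration.integrable_mult_right; simp)
    show "(\<lambda>(x, y). ((f x + g x) - (f y + g y))\<^sup>2 * gw s x y) \<in> borel_measurable (lborel \<Otimes>\<^sub>M lborel)"
      using f g by measurable
    show "AE x in lborel \<Otimes>\<^sub>M lborel. norm ((\<lambda>(x, y). ((f x + g x) - (f y + g y))\<^sup>2 * gw s x y) x)
          \<le> norm ((\<lambda>(x,y). 2 * ((f x - f y)\<^sup>2 * gw s x y) + 2 * ((g x - g y)\<^sup>2 * gw s x y)) x)"
    proof (intro AE_I2, clarify)
      fix x y
      have "((f x + g x) - (f y + g y))\<^sup>2 \<le> 2 * (f x - f y)\<^sup>2 + 2 * (g x - g y)\<^sup>2"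
        using ineq[of "f x - f y" "g x - g y"] by (simp add: algebra_simps)
      then have "((f x + g x) - (f y + g y))\<^sup>2 * gw s x y \<le> (2 * (f x - f y)\<^sup>2 + 2 * (g x - g y)\<^sup>2) * gw s x y"
        by (intro mult_right_mono gw_nonneg)
      then show "norm (((f x + g x) - (f y + g y))\<^sup>2 * gw s x y)
          \<le> norm (2 * ((f x - f y)\<^sup>2 * gw s x y) + 2 * ((g x - g y)\<^sup>2 * gw s x y))"
        using gw_nonneg[of s x y] by (simp add: algebra_simps)
    qed
  qed
  have i3: "AE x in lborel. x \<notin> \<Omega> \<longrightarrow> f x + g x = 0" using f(4) g(4) by auto
  show ?thesis unfolding Hs0_alt using f g i1 i2 i3 by auto
qed

lemma Hs0_scale:
  assumes "f \<in> Hs0 s \<Omega>"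
  shows "(\<lambda>x. a * f x) \<in> Hs0 s \<Omega>"
proof -
  have f: "f \<in> borel_measurable lborel" "integrable lborel (\<lambda>x. (f x)\<^sup>2)"
      "integrable (lborel \<Otimes>\<^sub>M lborel) (\<lambda>(x, y). (f x - f y)\<^sup>2 * gw s x y)"
      "AE x in lborel. x \<notin> \<Omega> \<longrightarrow> f x = 0"
    using assms(1) unfolding Hs0_alt by auto
  have "integrable lborel (\<lambda>x. a\<^sup>2 * (f x)\<^sup>2)" using f by auto
  moreover have "integrable (lborel \<Otimes>\<^sub>M lborel) (\<lambda>(x, y). a\<^sup>2 * ((f x - f y)\<^sup>2 * gw s x y))"
    using f(3) unfolding case_prod_beta by (intro integrable_mult_right; simp)
  ultimately show ?thesis unfolding Hs0_alt using f
    by (auto simp: power_mult_distrib right_diff_distrib[symmetric] mult.assoc case_prod_beta)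
qed

lemma Hs0_diff:
  assumes "f \<in> Hs0 s \<Omega>" "g \<in> Hs0 s \<Omega>"
  shows "(\<lambda>x. f x - g x) \<in> Hs0 s \<Omega>"
  using Hs0_add[OF assms(1) Hs0_scale[OF assms(2), of "-1"]] by simp

lemma Hs0_zero: "(\<lambda>x. 0) \<in> Hs0 s \<Omega>"
  unfolding Hs0_alt case_prod_beta by simp



definition bil :: "(real^'n \<Rightarrow> real^'n \<Rightarrow> real) \<Rightarrow> (real^'n \<Rightarrow> real) \<Rightarrow> (real^'n \<Rightarrow> real) \<Rightarrow> real" where
  "bil W f g = integral\<^sup>L (lborel \<Otimes>\<^sub>M lborel) (\<lambda>(x,y). (f x - f y) * (g x - g y) * W x y)"

definition adm :: "real \<Rightarrow> (real^'n \<Rightarrow> real^'n \<Rightarrow> real) \<Rightarrow> bool" where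
  "adm s W \<longleftrightarrow> (\<lambda>(x,y). W x y) \<in> borel_measurable (lborel \<Otimes>\<^sub>M lborel) \<and>
     (\<exists>C. \<forall>x y. x \<noteq> y \<longrightarrow> 0 \<le> W x y \<and> W x y \<le> C * gw s x y)"

lemma adm_gw: "adm s (gw s)"
  unfolding adm_def by (auto intro!: exI[of _ 1] simp: gw_nonneg)

lemma Hs0D:
  assumes "f \<in> Hs0 s \<Omega>"
  shows "f \<in> borel_measurable lborel" "integrable lborel (\<lambda>x. (f x)\<^sup>2)"
      "integrable (lborel \<Otimes>\<^sub>M lborel) (\<lambda>(x, y). (f x - f y)\<^sup>2 * gw s x y)"
      "AE x in lborel. x \<notin> \<Omega> \<longrightarrow> f x = 0"
  using assms unfolding Hs0_alt by auto

lemma abs_prod_le: "\<bar>a * b\<bar> \<le> a\<^sup>2 + (b::real)\<^sup>2"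
proof -
  have "2 * \<bar>a\<bar> * \<bar>b\<bar> \<le> \<bar>a\<bar>\<^sup>2 + \<bar>b\<bar>\<^sup>2"
    using zero_le_power2[of "\<bar>a\<bar> - \<bar>b\<bar>"] power2_diff[of "\<bar>a\<bar>" "\<bar>b\<bar>"] by linarith
  moreover have "0 \<le> \<bar>a\<bar> * \<bar>b\<bar>" by simp
  ultimately show ?thesis unfolding abs_mult power2_abs by linarith
qed

lemma bil_integrable:
  assumes W: "adm s W" and f: "f \<in> Hs0 s \<Omega>" and g: "g \<in> Hs0 s \<Omega>"
  shows "integrable (lborel \<Otimes>\<^sub>M lborel) (\<lambda>(x,y). (f x - f y) * (g x - g y) * W x y)"
proof -
  obtain C where C: "\<And>x y. x \<noteq> y \<Longrightarrow> 0 \<le> W x y \<and> W x y \<le> C * gw s x y"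
    and Wm: "(\<lambda>(x,y). W x y) \<in> borel_measurable (lborel \<Otimes>\<^sub>M lborel)"
    using W unfolding adm_def by blast
  note fm = Hs0D[OF f] and gm = Hs0D[OF g]
  show ?thesis
  proof (rule Bochner_Integration.integrable_bound[where f="\<lambda>(x,y). \<bar>C\<bar> * ((f x - f y)\<^sup>2 * gw s x y) + \<bar>C\<bar> * ((g x - g y)\<^sup>2 * gw s x y)"])
    show "integrable (lborel \<Otimes>\<^sub>M lborel) (\<lambda>(x,y). \<bar>C\<bar> * ((f x - f y)\<^sup>2 * gw s x y) + \<bar>C\<bar> * ((g x - g y)\<^sup>2 * gw s x y))"
      using fm(3) gm(3) unfolding case_prod_beta
      by (intro Bochner_Integration.integrable_add Bochner_Integration.integrable_mult_right; simp)
    have [measurable]: "(\<lambda>x. W (fst x) (snd x)) \<in> borel_measurable (lborel \<Otimes>\<^sub>M lborel)"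
      using Wm unfolding case_prod_beta .
    show "(\<lambda>(x,y). (f x - f y) * (g x - g y) * W x y) \<in> borel_measurable (lborel \<Otimes>\<^sub>M lborel)"
      using fm(1) gm(1) unfolding case_prod_beta by measurable
    show "AE z in lborel \<Otimes>\<^sub>M lborel. norm ((\<lambda>(x,y). (f x - f y) * (g x - g y) * W x y) z)
        \<le> norm ((\<lambda>(x,y). \<bar>C\<bar> * ((f x - f y)\<^sup>2 * gw s x y) + \<bar>C\<bar> * ((g x - g y)\<^sup>2 * gw s x y)) z)"
    proof (intro AE_I2, clarify)
      fix x y
      show "norm ((f x - f y) * (g x - g y) * W x y)
        \<le> norm (\<bar>C\<bar> * ((f x - f y)\<^sup>2 * gw s x y) + \<bar>C\<bar> * ((g x - g y)\<^sup>2 * gw s x y))"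
      proof (cases "x = y")
        case True then show ?thesis by simp
      next
        case False
        have W0: "0 \<le> W x y" "W x y \<le> \<bar>C\<bar> * gw s x y"
          using C[OF False] mult_right_mono[OF abs_ge_self gw_nonneg, of C s x y] by auto
        have "\<bar>(f x - f y) * (g x - g y) * W x y\<bar> = \<bar>(f x - f y) * (g x - g y)\<bar> * W x y"
          using W0 by (simp add: abs_mult)
        also have "\<dots> \<le> ((f x - f y)\<^sup>2 + (g x - g y)\<^sup>2) * (\<bar>C\<bar> * gw s x y)"
          by (intro mult_mono abs_prod_le W0) (auto intro: add_nonneg_nonneg)
        also have "\<dots> = \<bar>C\<bar> * ((f x - f y)\<^sup>2 * gw s x y) + \<bar>C\<bar> * ((g x - g y)\<^sup>2 * gw s x y)"
          by (simp add: algebra_simps)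
        finally show ?thesis using gw_nonneg[of s x y] by simp
      qed
    qed
  qed
qed

lemma bil_add1:
  assumes W: "adm s W" and f: "f \<in> Hs0 s \<Omega>" and g: "g \<in> Hs0 s \<Omega>" and h: "h \<in> Hs0 s \<Omega>"
  shows "bil W (\<lambda>x. f x + g x) h = bil W f h + bil W g h"
proof -
  have "bil W (\<lambda>x. f x + g x) h = integral\<^sup>L (lborel \<Otimes>\<^sub>M lborel)
     (\<lambda>z. (\<lambda>(x,y). (f x - f y) * (h x - h y) * W x y) z + (\<lambda>(x,y). (g x - g y) * (h x - h y) * W x y) z)"
    unfolding bil_def by (rule Bochner_Integration.integral_cong) (auto simp: algebra_simps)
  also have "\<dots> = bil W f h + bil W g h"
    unfolding bil_def
    by (rule Bochner_Integration.integral_add[OF bil_integrable[OF W f h] bil_integrable[OF W g h]])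
  finally show ?thesis .
qed

lemma bil_scale1:
  shows "bil W (\<lambda>x. c * f x) h = c * bil W f h"
proof -
  have "bil W (\<lambda>x. c * f x) h = integral\<^sup>L (lborel \<Otimes>\<^sub>M lborel)
     (\<lambda>z. c * (\<lambda>(x,y). (f x - f y) * (h x - h y) * W x y) z)"
    unfolding bil_def by (rule Bochner_Integration.integral_cong) (auto simp: algebra_simps)
  also have "\<dots> = c * bil W f h" unfolding bil_def by simp
  finally show ?thesis .
qed

lemma bil_sym: "bil W f g = bil W g f"
  unfolding bil_def by (rule Bochner_Integration.integral_cong) (auto simp: algebra_simps)

lemma bil_add2:
  assumes W: "adm s W" and f: "f \<in> Hs0 s \<Omega>" and g: "g \<in> Hs0 s \<Omega>" and h: "h \<in> Hs0 s \<Omega>"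
  shows "bil W h (\<lambda>x. f x + g x) = bil W h f + bil W h g"
  using bil_add1[OF assms] bil_sym by metis

lemma bil_scale2: "bil W h (\<lambda>x. c * f x) = c * bil W h f"
  using bil_scale1 bil_sym by metis

lemma bil_diff1:
  assumes W: "adm s W" and f: "f \<in> Hs0 s \<Omega>" and g: "g \<in> Hs0 s \<Omega>" and h: "h \<in> Hs0 s \<Omega>"
  shows "bil W (\<lambda>x. f x - g x) h = bil W f h - bil W g h"
  using bil_add1[OF W f Hs0_scale[OF g, of "-1"] h] bil_scale1[of W "-1" g h] by simp

lemma bil_diff2:
  assumes W: "adm s W" and f: "f \<in> Hs0 s \<Omega>" and g: "g \<in> Hs0 s \<Omega>" and h: "h \<in> Hs0 s \<Omega>"
  shows "bil W h (\<lambda>x. f x - g x) = bil W h f - bil W h g"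
  using bil_diff1[OF assms] bil_sym by metis

lemma bil_nonneg:
  assumes W: "adm s W"
  shows "0 \<le> bil W f f"
proof -
  obtain C where C: "\<And>x y. x \<noteq> y \<Longrightarrow> 0 \<le> W x y \<and> W x y \<le> C * gw s x y"
    using W unfolding adm_def by blast
  show ?thesis unfolding bil_def
  proof (intro integral_nonneg_AE AE_I2, clarify)
    fix x y show "0 \<le> (f x - f y) * (f x - f y) * W x y"
      using C[of x y] by (cases "x = y") auto
  qed
qed

lemma quad_disc:
  fixes A B C :: real
  assumes "\<And>t. 0 \<le> A + 2 * t * B + t\<^sup>2 * C" "0 \<le> C"
  shows "B\<^sup>2 \<le> A * C"
proof (cases "C = 0")
  case True
  have "B = 0"
  proof (rule ccontr)
    assume "B \<noteq> 0"
    then show False using assms(1)[of "- (A + 1) / (2 * B)"] True by (simp add: field_simps)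
  qed
  then show ?thesis using True by simp
next
  case False
  then have Cp: "C > 0" using assms(2) by simp
  have "0 \<le> A + 2 * (- B / C) * B + (- B / C)\<^sup>2 * C" by (rule assms(1))
  also have "\<dots> = (A * C - B\<^sup>2) / C" using Cp by (simp add: field_simps power2_eq_square)
  finally show ?thesis using Cp by (simp add: divide_nonneg_pos zero_le_divide_iff)
qed

lemma bil_expand:
  assumes W: "adm s W" and f: "f \<in> Hs0 s \<Omega>" and g: "g \<in> Hs0 s \<Omega>"
  shows "bil W (\<lambda>x. f x + t * g x) (\<lambda>x. f x + t * g x) = bil W f f + 2 * t * bil W f g + t\<^sup>2 * bil W g g"
proof -
  have tg: "(\<lambda>x. t * g x) \<in> Hs0 s \<Omega>" by (rule Hs0_scale[OF g])
  have ftg: "(\<lambda>x. f x + t * g x) \<in> Hs0 s \<Omega>" by (rule Hs0_add[OF f tg])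
  have "bil W (\<lambda>x. f x + t * g x) (\<lambda>x. f x + t * g x)
     = bil W f (\<lambda>x. f x + t * g x) + t * bil W g (\<lambda>x. f x + t * g x)"
    using bil_add1[OF W f tg ftg] bil_scale1[of W t g] by simp
  also have "\<dots> = bil W f f + t * bil W f g + t * (bil W g f + t * bil W g g)"
    using bil_add2[OF W f tg f] bil_add2[OF W f tg g] bil_scale2[of W f t g] bil_scale2[of W g t g] by simp
  finally show ?thesis using bil_sym[of W g f] by (simp add: algebra_simps power2_eq_square)
qed

lemma bil_CS:
  assumes W: "adm s W" and f: "f \<in> Hs0 s \<Omega>" and g: "g \<in> Hs0 s \<Omega>"
  shows "(bil W f g)\<^sup>2 \<le> bil W f f * bil W g g"
proof (rule quad_disc)
  fix t
  show "0 \<le> bil W f f + 2 * t * bil W f g + t\<^sup>2 * bil W g g"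
    using bil_nonneg[OF W, of "\<lambda>x. f x + t * g x"] bil_expand[OF W f g, of t] by simp
qed (rule bil_nonneg[OF W])

lemma bil_abs_le:
  assumes W: "adm s W" and f: "f \<in> Hs0 s \<Omega>" and g: "g \<in> Hs0 s \<Omega>"
  shows "\<bar>bil W f g\<bar> \<le> sqrt (bil W f f) * sqrt (bil W g g)"
  using bil_CS[OF assms] bil_nonneg[OF W]
  by (metis abs_ge_zero power2_abs real_le_rsqrt real_sqrt_mult)



lemma hs_inner_bil: "hs_inner s f g = cns CARD('n) s * bil (gw s) f g"
  for f g :: "real^'n \<Rightarrow> real"
  unfolding hs_inner_def bil_def gw_def by (simp add: divide_inverse)

lemma cns_pos: "0 < s \<Longrightarrow> s < 1 \<Longrightarrow> 0 < cns n s"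
  unfolding cns_def by (intro mult_pos_pos divide_pos_pos Gamma_real_pos) auto

lemma bil_nn:
  assumes W: "adm s W" and f: "f \<in> Hs0 s \<Omega>"
  shows "(\<integral>\<^sup>+ z. ennreal ((\<lambda>(x,y). (f x - f y) * (f x - f y) * W x y) z) \<partial>(lborel \<Otimes>\<^sub>M lborel)) = ennreal (bil W f f)"
proof -
  obtain C where C: "\<And>x y. x \<noteq> y \<Longrightarrow> 0 \<le> W x y \<and> W x y \<le> C * gw s x y"
    using W unfolding adm_def by blast
  show ?thesis unfolding bil_def
  proof (rule nn_integral_eq_integral[OF bil_integrable[OF W f f]])
    show "AE z in lborel \<Otimes>\<^sub>M lborel. 0 \<le> (\<lambda>(x,y). (f x - f y) * (f x - f y) * W x y) z"
    proof (intro AE_I2, clarify)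
      fix x y show "0 \<le> (f x - f y) * (f x - f y) * W x y"
        using C[of x y] by (cases "x = y") auto
    qed
  qed
qed

lemma poincare:
  fixes \<Omega> :: "(real^'n) set"
  assumes "bounded \<Omega>" and s0: "0 < s"
  shows "\<exists>P>0. \<forall>f\<in>Hs0 s \<Omega>. (\<integral>x. (f x)\<^sup>2 \<partial>lborel) \<le> P * bil (gw s) f f"
proof -
  obtain R where R: "0 < R" "\<Omega> \<subseteq> ball 0 R" using bounded_subset_ballD[OF assms(1)] by blast
  obtain p :: "real^'n" where p: "norm p = 3 * R" using vector_choose_size[of "3 * R"] R by auto
  define B where "B = ball p R"
  define a where "a = real CARD('n) + 2 * s"
  define c0 where "c0 = 1 / (5 * R) powr a"
  define mB where "mB = measure lborel B"
  have c0: "c0 > 0" unfolding c0_def using R by simp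
  have mB: "mB > 0" unfolding mB_def B_def using content_ball_pos[OF R(1)] by simp
  have emB: "emeasure lborel B = ennreal mB"
    unfolding mB_def by (rule emeasure_eq_ennreal_measure) (use emeasure_lborel_ball_finite[of p R] in \<open>auto simp: B_def\<close>)
  have key: "c0 \<le> gw s x y" if x: "x \<in> ball 0 R" and y: "y \<in> B" for x y
  proof -
    have "norm y > 2 * R" using y p norm_triangle_ineq2[of p y] by (auto simp: B_def dist_norm norm_minus_commute)
    moreover have "norm x < R" using x by simp
    moreover have "norm y \<le> norm p + norm (p - y)"
      using norm_triangle_ineq[of p "y - p"] by (simp add: norm_minus_commute)
    moreover have "norm (p - y) < R" using y by (simp add: B_def dist_norm)
    ultimately have d: "0 < dist x y" "dist x y \<le> 5 * R"
      using R(1) p norm_triangle_ineq4[of x y] by (auto simp: dist_norm)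
    have "dist x y powr a \<le> (5 * R) powr a"
      using d s0 by (intro powr_mono2) (auto simp: a_def)
    moreover have "0 < dist x y powr a" using d by simp
    ultimately show ?thesis unfolding gw_def c0_def a_def[symmetric]
      using R(1) by (intro divide_left_mono) auto
  qed
  have yout: "y \<notin> \<Omega>" if "y \<in> B" for y
  proof -
    have "norm y > 2 * R" using that p norm_triangle_ineq2[of p y] by (auto simp: B_def dist_norm norm_minus_commute)
    then show ?thesis using R by (auto simp: subset_iff)
  qed
  have main: "c0 * mB * (\<integral>x. (f x)\<^sup>2 \<partial>lborel) \<le> bil (gw s) f f" if f: "f \<in> Hs0 s \<Omega>" for f
  proof -
    note fm = Hs0D[OF f]
    have [measurable]: "f \<in> borel_measurable lborel" by (rule fm(1))
    have im[measurable]: "(\<lambda>x. indicator (ball 0 R) x * (f x)\<^sup>2) \<in> borel_measurable lborel"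
      using fm(1) by (intro borel_measurable_times borel_measurable_power borel_measurable_indicator) auto
    have AEy: "AE y in lborel. y \<in> B \<longrightarrow> f y = 0" using fm(4) yout by auto
    have AEx: "AE x in lborel. f x \<noteq> 0 \<longrightarrow> x \<in> ball 0 R" using fm(4)
      by eventually_elim (use R(2) in auto)
    have "ennreal (c0 * mB) * ennreal (\<integral>x. (f x)\<^sup>2 \<partial>lborel) = ennreal (c0 * mB) * (\<integral>\<^sup>+x. ennreal ((f x)\<^sup>2) \<partial>lborel)"
      by (subst nn_integral_eq_integral[OF fm(2)]) auto
    also have "\<dots> = ennreal (c0 * mB) * (\<integral>\<^sup>+x. ennreal (indicator (ball 0 R) x * (f x)\<^sup>2) \<partial>lborel)"
      by (intro arg_cong2[where f="(*)"] refl nn_integral_cong_AE) (use AEx in \<open>auto simp: indicator_def\<close>)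
    also have "\<dots> = (\<integral>\<^sup>+x. ennreal (c0 * mB) * ennreal (indicator (ball 0 R) x * (f x)\<^sup>2) \<partial>lborel)"
      by (rule nn_integral_cmult[symmetric]) (use im in measurable)
    also have "\<dots> = (\<integral>\<^sup>+x. ennreal (indicator (ball 0 R) x * (f x)\<^sup>2 * c0) * emeasure lborel B \<partial>lborel)"
      by (intro nn_integral_cong) (use c0 mB in \<open>simp add: emB ennreal_mult[symmetric] mult_ac\<close>)
    also have "\<dots> = (\<integral>\<^sup>+x. \<integral>\<^sup>+y. ennreal (indicator (ball 0 R) x * (f x)\<^sup>2 * c0) * indicator B y \<partial>lborel \<partial>lborel)"
      by (intro nn_integral_cong, subst nn_integral_cmult_indicator) (auto simp: B_def)
    also have "\<dots> \<le> (\<integral>\<^sup>+x. \<integral>\<^sup>+y. ennreal ((f x - f y) * (f x - f y) * gw s x y) \<partial>lborel \<partial>lborel)"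
    proof (rule nn_integral_mono)
      fix x
      have "AE y in lborel. ennreal (indicator (ball 0 R) x * (f x)\<^sup>2 * c0) * indicator B y
            \<le> ennreal ((f x - f y) * (f x - f y) * gw s x y)"
        using AEy
      proof eventually_elim
        case (elim y)
        show ?case
        proof (cases "x \<in> ball 0 R \<and> y \<in> B")
          case True
          then have "(f x)\<^sup>2 * c0 \<le> (f x - f y) * (f x - f y) * gw s x y"
            using elim key[of x y] by (auto simp: power2_eq_square intro!: mult_left_mono)
          then show ?thesis using True by (auto intro!: ennreal_leI)
        next
          case False then show ?thesis by (auto simp: indicator_def)
        qed
      qed
      then show "(\<integral>\<^sup>+y. ennreal (indicator (ball 0 R) x * (f x)\<^sup>2 * c0) * indicator B y \<partial>lborel)
         \<le> (\<integral>\<^sup>+y. ennreal ((f x - f y) * (f x - f y) * gw s x y) \<partial>lborel)"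
        by (rule nn_integral_mono_AE)
    qed
    also have "\<dots> = (\<integral>\<^sup>+ z. ennreal ((\<lambda>(x,y). (f x - f y) * (f x - f y) * gw s x y) z) \<partial>(lborel \<Otimes>\<^sub>M lborel))"
      by (subst lborel.nn_integral_fst[symmetric]) (auto)
    also have "\<dots> = ennreal (bil (gw s) f f)" by (rule bil_nn[OF adm_gw f])
    finally have "ennreal (c0 * mB * (\<integral>x. (f x)\<^sup>2 \<partial>lborel)) \<le> ennreal (bil (gw s) f f)"
      using c0 mB by (simp add: ennreal_mult')
    then show ?thesis using ennreal_le_iff[OF bil_nonneg[OF adm_gw[of s], of f]] by blast
  qed
  show ?thesis
  proof (intro exI[of _ "1 / (c0 * mB)"] conjI ballI)
    show "0 < 1 / (c0 * mB)" using c0 mB by simp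
    fix f assume "f \<in> Hs0 s \<Omega>"
    from main[OF this] show "(\<integral>x. (f x)\<^sup>2 \<partial>lborel) \<le> 1 / (c0 * mB) * bil (gw s) f f"
      using c0 mB by (simp add: field_simps)
  qed
qed



lemma fatou_bound:
  fixes g :: "nat \<Rightarrow> 'a \<Rightarrow> real"
  assumes [measurable]: "\<And>j. g j \<in> borel_measurable M"
    and lim: "AE z in M. (\<lambda>j. g j z) \<longlonglongrightarrow> G z"
    and bd: "\<And>j. j \<ge> k \<Longrightarrow> (\<integral>\<^sup>+z. ennreal (g j z) \<partial>M) \<le> B"
  shows "(\<integral>\<^sup>+z. ennreal (G z) \<partial>M) \<le> B"
proof -
  have "(\<integral>\<^sup>+z. ennreal (G z) \<partial>M) = (\<integral>\<^sup>+z. liminf (\<lambda>j. ennreal (g j z)) \<partial>M)"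
    using lim by (intro nn_integral_cong_AE)
      (auto elim!: eventually_mono intro!: lim_imp_Liminf[symmetric] tendsto_ennrealI)
  also have "\<dots> \<le> liminf (\<lambda>j. \<integral>\<^sup>+z. ennreal (g j z) \<partial>M)"
    by (intro nn_integral_liminf) measurable
  also have "\<dots> \<le> limsup (\<lambda>j. \<integral>\<^sup>+z. ennreal (g j z) \<partial>M)"
    by (intro Liminf_le_Limsup) simp
  also have "\<dots> \<le> B"
    by (intro Limsup_bounded) (use bd in \<open>auto simp: eventually_sequentially\<close>)
  finally show ?thesis .
qed

lemma ae_conv_fast:
  fixes vs :: "nat \<Rightarrow> 'a \<Rightarrow> real"
  assumes [measurable]: "\<And>k. vs k \<in> borel_measurable M"
    and A: "0 \<le> A"
    and bd: "\<And>k. (\<integral>\<^sup>+x. ennreal ((vs (Suc k) x - vs k x)\<^sup>2) \<partial>M) \<le> ennreal (A * (1/8)^k)"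
  shows "AE x in M. convergent (\<lambda>k. vs k x)"
proof -
  define D where "D k x = vs (Suc k) x - vs k x" for k x
  have [measurable]: "D k \<in> borel_measurable M" for k unfolding D_def by measurable
  define F where "F x = (\<Sum>k. ennreal (2^k * (D k x)\<^sup>2))" for x
  have Fm[measurable]: "F \<in> borel_measurable M" unfolding F_def by measurable
  have geo: "summable (\<lambda>k. A * (1/4::real)^k)"
    by (intro summable_mult summable_geometric) auto
  have "integral\<^sup>N M F = (\<Sum>k. \<integral>\<^sup>+x. ennreal (2^k * (D k x)\<^sup>2) \<partial>M)"
    unfolding F_def by (rule nn_integral_suminf) measurable
  also have "\<dots> \<le> (\<Sum>k. ennreal (A * (1/4)^k))"
  proof (intro suminf_le)
    fix k
    have "(\<integral>\<^sup>+x. ennreal (2^k * (D k x)\<^sup>2) \<partial>M) = ennreal (2^k) * (\<integral>\<^sup>+x. ennreal ((D k x)\<^sup>2) \<partial>M)"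
      by (subst nn_integral_cmult[symmetric]) (auto simp: ennreal_mult)
    also have "\<dots> \<le> ennreal (2^k) * ennreal (A * (1/8)^k)"
      using bd[of k] unfolding D_def by (intro mult_left_mono) auto
    also have "\<dots> = ennreal (A * (1/4)^k)"
      using A by (simp add: ennreal_mult[symmetric] power_divide field_simps flip: power_mult_distrib)
    finally show "(\<integral>\<^sup>+x. ennreal (2^k * (D k x)\<^sup>2) \<partial>M) \<le> ennreal (A * (1/4)^k)" .
  qed auto
  also have "\<dots> = ennreal (\<Sum>k. A * (1/4)^k)"
    using geo A by (intro suminf_ennreal2) auto
  finally have "integral\<^sup>N M F \<noteq> \<infinity>" by (auto simp: top_unique)
  from nn_integral_PInf_AE[OF Fm this]
  show ?thesis
  proof eventually_elim
    case (elim x)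
    have sm: "summable (\<lambda>k. 2^k * (D k x)\<^sup>2)"
      using elim unfolding F_def by (intro summable_suminf_not_top) auto
    define S where "S = (\<Sum>k. 2^k * (D k x)\<^sup>2)"
    have tb: "2^k * (D k x)\<^sup>2 \<le> S" for k
      using sum_le_suminf[OF sm, of "{k}"] unfolding S_def by auto
    have "\<bar>D k x\<bar> \<le> sqrt S * sqrt (1/2) ^ k" for k
    proof -
      have "(D k x)\<^sup>2 \<le> S * (1/2)^k"
        using tb[of k] by (simp add: field_simps power_divide)
      then have "sqrt ((D k x)\<^sup>2) \<le> sqrt (S * (1/2)^k)" by (rule real_sqrt_le_mono)
      moreover have "sqrt ((D k x)\<^sup>2) = \<bar>D k x\<bar>" by (rule real_sqrt_abs)
      moreover have "sqrt (S * (1/2)^k) = sqrt S * sqrt (1/2) ^ k" by (simp add: real_sqrt_mult real_sqrt_power)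
      ultimately show ?thesis by simp
    qed
    note bnd = this
    have gs: "summable (\<lambda>k. sqrt S * sqrt (1/2) ^ k)"
      by (intro summable_mult summable_geometric) simp
    have "summable (\<lambda>k. norm (D k x))"
      using summable_comparison_test'[OF gs, of 0 "\<lambda>k. norm (D k x)"] bnd by simp
    then have "summable (\<lambda>k. D k x)" by (rule summable_norm_cancel)
    then have "convergent (\<lambda>k. vs 0 x + (\<Sum>i<k. D i x))"
      by (intro convergent_add convergent_const) (simp add: summable_iff_convergent)
    moreover have "vs 0 x + (\<Sum>i<k. D i x) = vs k x" for k
      unfolding D_def by (induction k) auto
    ultimately show ?case by simp
  qed
qed



lemma riesz:
  fixes \<Omega> :: "(real^'n) set" and lf :: "(real^'n \<Rightarrow> real) \<Rightarrow> real"
  assumes \<Omega>b: "bounded \<Omega>" and s0: "0 < s"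
    and ladd: "\<And>f g. f \<in> Hs0 s \<Omega> \<Longrightarrow> g \<in> Hs0 s \<Omega> \<Longrightarrow> lf (\<lambda>x. f x + g x) = lf f + lf g"
    and lscale: "\<And>f c. f \<in> Hs0 s \<Omega> \<Longrightarrow> lf (\<lambda>x. c * f x) = c * lf f"
    and lbd: "\<And>f. f \<in> Hs0 s \<Omega> \<Longrightarrow> \<bar>lf f\<bar> \<le> L * sqrt (bil (gw s) f f)"
  shows "\<exists>v \<in> Hs0 s \<Omega>. \<forall>w \<in> Hs0 s \<Omega>. lf w = bil (gw s) w v"
proof -
  define H where "H = Hs0 s \<Omega>"
  define b where "b = (bil (gw s) :: (real^'n \<Rightarrow> real) \<Rightarrow> (real^'n \<Rightarrow> real) \<Rightarrow> real)"
  define q where "q f = b f f" for f :: "real^'n \<Rightarrow> real"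
  define E where "E f = q f / 2 - lf f" for f :: "real^'n \<Rightarrow> real"
  define L1 where "L1 = \<bar>L\<bar>"
  have W: "adm s (gw s)" by (rule adm_gw)
  have qnn: "0 \<le> q f" for f unfolding q_def b_def by (rule bil_nonneg[OF W])
  have L1: "0 \<le> L1" unfolding L1_def by simp
  have lbd1: "lf f \<le> L1 * sqrt (q f)" if "f \<in> H" for f
  proof -
    have "lf f \<le> L * sqrt (q f)" using lbd[of f] that unfolding H_def q_def b_def by simp
    also have "\<dots> \<le> L1 * sqrt (q f)" unfolding L1_def using qnn[of f] by (intro mult_right_mono) auto
    finally show ?thesis .
  qed
  have labs: "\<bar>lf f\<bar> \<le> L1 * sqrt (q f)" if "f \<in> H" for f
  proof -
    have "\<bar>lf f\<bar> \<le> L * sqrt (q f)" using lbd[of f] that unfolding H_def q_def b_def by simp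
    also have "\<dots> \<le> L1 * sqrt (q f)" unfolding L1_def using qnn[of f] by (intro mult_right_mono) auto
    finally show ?thesis .
  qed
  have sq: "sqrt (q f) ^ 2 = q f" for f using qnn[of f] by simp
  have Elow: "- (L1\<^sup>2 / 2) \<le> E f" if "f \<in> H" for f
  proof -
    have "0 \<le> (sqrt (q f) - L1)\<^sup>2" by simp
    then have "0 \<le> q f - 2 * L1 * sqrt (q f) + L1\<^sup>2"
      using sq[of f] by (simp add: power2_diff algebra_simps)
    then show ?thesis using lbd1[OF that] unfolding E_def by simp
  qed
  have H0: "(\<lambda>x. 0) \<in> H" unfolding H_def by (rule Hs0_zero)
  have Hadd: "(\<lambda>x. f x + g x) \<in> H" if "f \<in> H" "g \<in> H" for f g
    using Hs0_add that unfolding H_def by blast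
  have Hscale: "(\<lambda>x. c * f x) \<in> H" if "f \<in> H" for f c
    using Hs0_scale that unfolding H_def by blast
  have Hdiff: "(\<lambda>x. f x - g x) \<in> H" if "f \<in> H" "g \<in> H" for f g
    using Hs0_diff that unfolding H_def by blast
  have expand: "q (\<lambda>x. f x + t * g x) = q f + 2 * t * b f g + t\<^sup>2 * q g" if "f \<in> H" "g \<in> H" for f g t
    using bil_expand[OF W, of f \<Omega> g t] that unfolding H_def q_def b_def by simp
  have lexp: "lf (\<lambda>x. f x + t * g x) = lf f + t * lf g" if "f \<in> H" "g \<in> H" for f g t
    using ladd[of f "\<lambda>x. t * g x"] lscale[of g t] that Hscale unfolding H_def by simp
  define m where "m = Inf (E ` H)"
  have bdd: "bdd_below (E ` H)" using Elow by (intro bdd_belowI[of _ "- (L1\<^sup>2 / 2)"]) auto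
  have mle: "m \<le> E f" if "f \<in> H" for f
    unfolding m_def using bdd that by (intro cInf_lower) auto
  define d where "d k = (1/8::real)^k" for k :: nat
  have dpos: "0 < d k" for k unfolding d_def by simp
  have dle1: "d k \<le> 1" for k unfolding d_def by (simp add: power_le_one)
  have dmono: "d j \<le> d k" if "k \<le> j" for j k
    unfolding d_def using that by (intro power_decreasing) auto
  have "\<exists>f. f \<in> H \<and> E f < m + d k" for k
  proof -
    have "Inf (E ` H) < m + d k" using dpos[of k] unfolding m_def by simp
    from cInf_lessD[OF _ this] H0 show ?thesis by auto
  qed
  then obtain vs where vs: "\<And>k. vs k \<in> H" "\<And>k. E (vs k) < m + d k" by metis
  \<comment> \<open>parallelogram\<close>
  have para: "q (\<lambda>x. g x - f x) / 4 \<le> E f + E g - 2 * m" if f: "f \<in> H" and g: "g \<in> H" for f g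
  proof -
    define dd where "dd = (\<lambda>x. g x - f x)"
    have dd: "dd \<in> H" unfolding dd_def by (rule Hdiff[OF g f])
    define mid where "mid = (\<lambda>x. f x + (1/2) * dd x)"
    have mid: "mid \<in> H" unfolding mid_def by (intro Hadd Hscale f dd)
    have g_eq: "g = (\<lambda>x. f x + 1 * dd x)" unfolding dd_def by auto
    have "q mid = q f + b f dd + q dd / 4" unfolding mid_def using expand[OF f dd, of "1/2"]
      by (simp add: power2_eq_square)
    moreover have "q g = q f + 2 * b f dd + q dd" using expand[OF f dd, of 1] g_eq by simp
    moreover have "lf mid = lf f + lf dd / 2" unfolding mid_def using lexp[OF f dd, of "1/2"] by simp
    moreover have "lf g = lf f + lf dd" using lexp[OF f dd, of 1] g_eq by simp
    moreover have "m \<le> E mid" by (rule mle[OF mid])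
    ultimately show ?thesis unfolding E_def dd_def[symmetric] by (simp add: field_simps)
  qed
  have cauchy: "q (\<lambda>x. vs j x - vs k x) \<le> 8 * d k" if "k \<le> j" for j k
  proof -
    have "q (\<lambda>x. vs j x - vs k x) / 4 \<le> E (vs k) + E (vs j) - 2 * m" by (rule para[OF vs(1) vs(1)])
    also have "\<dots> \<le> d k + d j" using vs(2)[of k] vs(2)[of j] by simp
    also have "\<dots> \<le> 2 * d k" using dmono[OF that] by simp
    finally show ?thesis by simp
  qed
  obtain P where P: "P > 0" "\<And>f. f \<in> H \<Longrightarrow> (\<integral>x. (f x)\<^sup>2 \<partial>lborel) \<le> P * q f"
    using poincare[OF \<Omega>b s0] unfolding H_def q_def b_def by blast
  have vsm[measurable]: "vs k \<in> borel_measurable lborel" for k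
    using Hs0D(1) vs(1) unfolding H_def by blast
  have L2diff: "(\<integral>\<^sup>+x. ennreal ((vs j x - vs k x)\<^sup>2) \<partial>lborel) \<le> ennreal (8 * P * d k)" if "k \<le> j" for j k
  proof -
    have D: "(\<lambda>x. vs j x - vs k x) \<in> H" by (rule Hdiff[OF vs(1) vs(1)])
    have "(\<integral>\<^sup>+x. ennreal ((vs j x - vs k x)\<^sup>2) \<partial>lborel) = ennreal (\<integral>x. (vs j x - vs k x)\<^sup>2 \<partial>lborel)"
      using Hs0D(2)[of "\<lambda>x. vs j x - vs k x"] D unfolding H_def
      by (intro nn_integral_eq_integral) auto
    also have "\<dots> \<le> ennreal (P * q (\<lambda>x. vs j x - vs k x))" using P(2)[OF D] by (intro ennreal_leI)
    also have "\<dots> \<le> ennreal (8 * P * d k)" using cauchy[OF that] P(1)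
      by (intro ennreal_leI) (simp add: mult_left_mono)
    finally show ?thesis .
  qed
  have "AE x in lborel. convergent (\<lambda>k. vs k x)"
    by (rule ae_conv_fast[of vs lborel "8 * P"]) (use P(1) L2diff in \<open>auto simp: d_def\<close>)
  moreover have "AE x in lborel. \<forall>k. x \<notin> \<Omega> \<longrightarrow> vs k x = 0"
    using vs(1) unfolding H_def by (intro AE_all_countable[THEN iffD2] allI) (auto dest: Hs0D(4))
  ultimately have "AE x in lborel. convergent (\<lambda>k. vs k x) \<and> (\<forall>k. x \<notin> \<Omega> \<longrightarrow> vs k x = 0)"
    by eventually_elim auto
  then obtain N0 where N0: "{x \<in> space lborel. \<not> (convergent (\<lambda>k. vs k x) \<and> (\<forall>k. x \<notin> \<Omega> \<longrightarrow> vs k x = 0))} \<subseteq> N0"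
     "emeasure lborel N0 = 0" "N0 \<in> sets lborel"
    by (rule AE_E)
  define v where "v x = lim (\<lambda>k. vs k x)" for x
  have vm[measurable]: "v \<in> borel_measurable lborel" unfolding v_def by measurable
  have vlim: "(\<lambda>k. vs k x) \<longlonglongrightarrow> v x" if "x \<notin> N0" for x
    using N0(1) that unfolding v_def by (auto simp: convergent_LIMSEQ_iff)
  have vzero: "v x = 0" if "x \<notin> N0" "x \<notin> \<Omega>" for x
  proof -
    have "(\<lambda>k. vs k x) = (\<lambda>k. 0)" using N0(1) that by auto
    then show ?thesis using vlim[OF that(1)] LIMSEQ_unique[OF _ tendsto_const] by metis
  qed
  have AEN0: "AE x in lborel. x \<notin> N0" using N0 by (intro AE_I'[of N0]) (auto simp: null_sets_def)
  have AEN0p: "AE z in lborel \<Otimes>\<^sub>M lborel. fst z \<notin> N0 \<and> snd z \<notin> N0"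
  proof (rule lborel_pair.AE_pair_measure)
    show "{x \<in> space (lborel \<Otimes>\<^sub>M lborel). fst x \<notin> N0 \<and> snd x \<notin> N0} \<in> sets (lborel \<Otimes>\<^sub>M lborel)"
      using N0(3) by measurable
    show "AE x in lborel. AE y in lborel. fst (x, y) \<notin> N0 \<and> snd (x, y) \<notin> N0"
      using AEN0 by eventually_elim (use AEN0 in auto)
  qed
  define w where "w k = (\<lambda>x. v x - vs k x)" for k
  have wm[measurable]: "w k \<in> borel_measurable lborel" for k unfolding w_def by measurable
  have wprop: "w k \<in> H \<and> q (w k) \<le> 8 * d k" for k
  proof -
    have "(\<integral>\<^sup>+x. ennreal ((w k x)\<^sup>2) \<partial>lborel) \<le> ennreal (8 * P * d k)"
    proof (rule fatou_bound[where g="\<lambda>j x. (vs j x - vs k x)\<^sup>2" and k=k])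
      show "AE x in lborel. (\<lambda>j. (vs j x - vs k x)\<^sup>2) \<longlonglongrightarrow> (w k x)\<^sup>2"
        using AEN0 by eventually_elim (auto simp: w_def intro!: tendsto_intros vlim)
    qed (use L2diff in auto)
    then have wL2: "integrable lborel (\<lambda>x. (w k x)\<^sup>2)"
      by (intro integrableI_nonneg) (auto simp: top.not_eq_extremum intro: le_less_trans)
    define G where "G f = (\<lambda>(x::real^'n,y). (f x - f y) * (f x - f y) * gw s x y)" for f :: "real^'n \<Rightarrow> real"
    have Gm[measurable]: "G f \<in> borel_measurable (lborel \<Otimes>\<^sub>M lborel)" if "f \<in> borel_measurable lborel" for f
      using that unfolding G_def by measurable
    have Gbd: "(\<integral>\<^sup>+z. ennreal (G (w k) z) \<partial>(lborel \<Otimes>\<^sub>M lborel)) \<le> ennreal (8 * d k)"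
    proof (rule fatou_bound[where g="\<lambda>j. G (\<lambda>x. vs j x - vs k x)" and k=k])
      show "G (\<lambda>x. vs j x - vs k x) \<in> borel_measurable (lborel \<Otimes>\<^sub>M lborel)" for j
        by (rule Gm) measurable
      show "AE z in lborel \<Otimes>\<^sub>M lborel. (\<lambda>j. G (\<lambda>x. vs j x - vs k x) z) \<longlonglongrightarrow> G (w k) z"
        using AEN0p by eventually_elim (auto simp: G_def w_def split: prod.splits intro!: tendsto_intros vlim)
      fix j assume "k \<le> j"
      have D: "(\<lambda>x. vs j x - vs k x) \<in> Hs0 s \<Omega>" using Hdiff[OF vs(1) vs(1)] unfolding H_def .
      have "(\<integral>\<^sup>+z. ennreal (G (\<lambda>x. vs j x - vs k x) z) \<partial>(lborel \<Otimes>\<^sub>M lborel)) = ennreal (q (\<lambda>x. vs j x - vs k x))"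
        unfolding G_def q_def b_def by (rule bil_nn[OF W D])
      also have "\<dots> \<le> ennreal (8 * d k)" using cauchy[OF \<open>k \<le> j\<close>] by (intro ennreal_leI)
      finally show "(\<integral>\<^sup>+z. ennreal (G (\<lambda>x. vs j x - vs k x) z) \<partial>(lborel \<Otimes>\<^sub>M lborel)) \<le> ennreal (8 * d k)" .
    qed
    have Gnn: "0 \<le> G f z" for f z unfolding G_def by (auto simp: case_prod_beta gw_nonneg)
    have Gint: "integrable (lborel \<Otimes>\<^sub>M lborel) (G (w k))"
      using Gbd by (intro integrableI_nonneg) (auto simp: Gnn top.not_eq_extremum intro: le_less_trans)
    have Gint2: "integrable (lborel \<Otimes>\<^sub>M lborel) (\<lambda>(x, y). (w k x - w k y)\<^sup>2 * gw s x y)"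
      using Gint unfolding G_def by (simp add: power2_eq_square)
    have AEz: "AE x in lborel. x \<notin> \<Omega> \<longrightarrow> w k x = 0"
      using AEN0 by eventually_elim (use N0(1) in \<open>auto simp: w_def vzero\<close>)
    have wH: "w k \<in> H" unfolding H_def Hs0_alt using wL2 Gint2 AEz wm by blast
    have "ennreal (q (w k)) = (\<integral>\<^sup>+z. ennreal (G (w k) z) \<partial>(lborel \<Otimes>\<^sub>M lborel))"
      unfolding G_def q_def b_def using bil_nn[OF W wH[unfolded H_def]] by simp
    also have "\<dots> \<le> ennreal (8 * d k)" by (rule Gbd)
    finally have "q (w k) \<le> 8 * d k" using dpos[of k] by (simp add: ennreal_le_iff)
    with wH show ?thesis by blast
  qed
  have v_eq: "v = (\<lambda>x. vs k x + 1 * w k x)" for k unfolding w_def by auto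
  have vH: "v \<in> H" using v_eq[of 0] Hadd[OF vs(1) Hscale[OF conjunct1[OF wprop]]] by metis
  define Q0 where "Q0 = 4 * \<bar>m\<bar> + 4 + 4 * L1\<^sup>2"
  have qvs: "q (vs k) \<le> Q0" for k
  proof -
    have "q (vs k) / 2 - lf (vs k) < m + 1" using vs(2)[of k] dle1[of k] unfolding E_def by simp
    moreover have "lf (vs k) \<le> L1 * sqrt (q (vs k))" by (rule lbd1[OF vs(1)])
    moreover have "L1 * sqrt (q (vs k)) \<le> L1\<^sup>2 + q (vs k) / 4"
    proof -
      have "0 \<le> (sqrt (q (vs k)) / 2 - L1)\<^sup>2" by simp
      then show ?thesis using sq[of "vs k"] by (simp add: power2_diff power_divide algebra_simps)
    qed
    ultimately show ?thesis unfolding Q0_def by linarith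
  qed
  have Ev: "E v \<le> m + 5 * d k + (sqrt Q0 + L1) * sqrt 8 * sqrt (d k)" for k
  proof -
    have wk: "w k \<in> H" "q (w k) \<le> 8 * d k" using wprop[of k] by auto
    have "q v = q (vs k) + 2 * b (vs k) (w k) + q (w k)"
      using expand[OF vs(1)[of k] wk(1), of 1] v_eq[of k] by simp
    moreover have "lf v = lf (vs k) + lf (w k)"
      using lexp[OF vs(1)[of k] wk(1), of 1] v_eq[of k] by simp
    ultimately have "E v = E (vs k) + b (vs k) (w k) + q (w k) / 2 - lf (w k)"
      unfolding E_def by (simp add: field_simps)
    also have "\<dots> \<le> (m + d k) + sqrt Q0 * (sqrt 8 * sqrt (d k)) + 4 * d k + L1 * (sqrt 8 * sqrt (d k))"
    proof -
      have sq8: "sqrt (q (w k)) \<le> sqrt 8 * sqrt (d k)"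
        using wk(2) by (metis real_sqrt_le_mono real_sqrt_mult)
      have "\<bar>b (vs k) (w k)\<bar> \<le> sqrt (q (vs k)) * sqrt (q (w k))"
        using bil_abs_le[OF W, of "vs k" \<Omega> "w k"] vs(1) wk(1) unfolding H_def q_def b_def by simp
      also have "\<dots> \<le> sqrt Q0 * (sqrt 8 * sqrt (d k))"
        using qvs[of k] sq8 qnn[of "vs k"] qnn[of "w k"] by (intro mult_mono) auto
      finally have b1: "b (vs k) (w k) \<le> sqrt Q0 * (sqrt 8 * sqrt (d k))" by simp
      have l1: "- lf (w k) \<le> L1 * (sqrt 8 * sqrt (d k))"
      proof -
        have "- lf (w k) \<le> L1 * sqrt (q (w k))" using labs[OF wk(1)] by simp
        also have "\<dots> \<le> L1 * (sqrt 8 * sqrt (d k))" using sq8 L1 by (intro mult_left_mono)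
        finally show ?thesis .
      qed
      show ?thesis using vs(2)[of k] b1 l1 wk(2) by simp
    qed
    also have "\<dots> = m + 5 * d k + (sqrt Q0 + L1) * sqrt 8 * sqrt (d k)"
      by (simp add: algebra_simps)
    finally show ?thesis by simp
  qed
  have "(\<lambda>k. m + 5 * d k + (sqrt Q0 + L1) * sqrt 8 * sqrt (d k)) \<longlonglongrightarrow> m + 5 * 0 + (sqrt Q0 + L1) * sqrt 8 * sqrt 0"
    unfolding d_def by (intro tendsto_intros LIMSEQ_power_zero) auto
  then have Evm: "E v \<le> m" using Ev by (intro LIMSEQ_le_const[of _ "m"]) (auto intro: order_trans)
  show ?thesis
  proof (intro bexI[of _ v] ballI)
    fix f assume f: "f \<in> Hs0 s \<Omega>"
    then have fH: "f \<in> H" unfolding H_def .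
    define B where "B = (b v f - lf f) / 2"
    have "B\<^sup>2 \<le> 0 * (q f / 2)"
    proof (rule quad_disc)
      fix t
      have "E v \<le> E (\<lambda>x. v x + t * f x)" using Evm mle[OF Hadd[OF vH Hscale[OF fH, of t]]] by linarith
      moreover have "E (\<lambda>x. v x + t * f x) = E v + t * (b v f - lf f) + t\<^sup>2 * (q f / 2)"
        unfolding E_def using expand[OF vH fH, of t] lexp[OF vH fH, of t] by (simp add: field_simps)
      ultimately show "0 \<le> 0 + 2 * t * B + t\<^sup>2 * (q f / 2)" unfolding B_def by simp
    qed (simp add: qnn)
    then have "B = 0" by simp
    then show "lf f = bil (gw s) f v" unfolding B_def b_def using bil_sym[of "gw s" v f] by simp
  qed (use vH H_def in simp)
qed



lemma primH_deriv:
  assumes "continuous_on UNIV h"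
  shows "(primH h has_real_derivative h x) (at x)"
proof -
  define a where "a = min x 0 - 1"
  define b where "b = max x 0 + 1"
  have c: "continuous_on {a..b} h" using continuous_on_subset[OF assms] by blast
  have ab: "a \<le> 0" "0 \<le> b" "a \<le> x" "x \<le> b" by (auto simp: a_def b_def)
  have D: "((\<lambda>u. interval_lebesgue_integral lborel (ereal 0) (ereal u) h) has_vector_derivative h x) (at x within {a..b})"
    by (rule interval_integral_FTC2[OF ab(1,2) c ab(3,4)])
  have AT: "at x within {a..b} = at x" by (rule at_within_Icc_at) (auto simp: a_def b_def)
  have "((\<lambda>u. interval_lebesgue_integral lborel (ereal 0) (ereal u) h) has_vector_derivative h x) (at x)"
    using D unfolding AT .
  then have "(primH h has_vector_derivative h x) (at x)"
    unfolding primH_def zero_ereal_def .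
  then show ?thesis unfolding has_real_derivative_iff_has_vector_derivative .
qed

lemma primH_0: "primH h 0 = 0"
proof -
  have *: "\<And>x::real. (0 < x \<and> x < 0) = False" by auto
  show ?thesis by (simp add: primH_def interval_lebesgue_integral_def einterval_def set_lebesgue_integral_def indicator_def *)
qed

lemma primH_cont: assumes "continuous_on UNIV h" shows "continuous_on UNIV (primH h)"
proof (rule continuous_at_imp_continuous_on, rule ballI)
  fix x show "isCont (primH h) x" by (rule DERIV_isCont[OF primH_deriv[OF assms]])
qed

lemma primH_convex:
  assumes h: "continuous_on UNIV h" "mono h"
  shows "primH h a + h a * (b - a) \<le> primH h b"
proof (cases a b rule: linorder_cases)
  case less
  obtain z where z: "a < z" "z < b" "primH h b - primH h a = (b - a) * h z"
    using MVT2[OF less primH_deriv[OF h(1)]] by blast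
  have "h a \<le> h z" using monoD[OF h(2), of a z] z by simp
  then have "(b - a) * h a \<le> (b - a) * h z" using less by (intro mult_left_mono) auto
  then show ?thesis using z by argo
next
  case equal then show ?thesis by simp
next
  case greater
  obtain z where z: "b < z" "z < a" "primH h a - primH h b = (a - b) * h z"
    using MVT2[OF greater primH_deriv[OF h(1)]] by blast
  have "h z \<le> h a" using monoD[OF h(2), of z a] z by simp
  then have "(a - b) * h z \<le> (a - b) * h a" using greater by (intro mult_left_mono) auto
  then show ?thesis using z by argo
qed

lemma primH_nonneg:
  assumes h: "continuous_on UNIV h" "mono h" "h 0 = 0"
  shows "0 \<le> primH h t"
  using primH_convex[OF h(1,2), of 0 t] h(3) by (simp add: primH_0)

lemma primH_le:
  assumes h: "continuous_on UNIV h" "mono h"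
  shows "primH h t \<le> t * h t"
  using primH_convex[OF h(1,2), of t 0] by (simp add: primH_0 algebra_simps)



lemma Hs0_lebesgue:
  assumes "f \<in> Hs0 s \<Omega>"
  shows "f \<in> borel_measurable lebesgue" "integrable lebesgue (\<lambda>x. (f x)\<^sup>2)"
    "integral\<^sup>L lebesgue (\<lambda>x. (f x)\<^sup>2) = integral\<^sup>L lborel (\<lambda>x. (f x)\<^sup>2)"
proof -
  have fm[measurable]: "f \<in> borel_measurable lborel" by (rule Hs0D(1)[OF assms])
  show "f \<in> borel_measurable lebesgue" by (rule measurable_completion) simp
  show "integrable lebesgue (\<lambda>x. (f x)\<^sup>2)"
    using Hs0D(2)[OF assms] by (subst integrable_completion) auto
  show "integral\<^sup>L lebesgue (\<lambda>x. (f x)\<^sup>2) = integral\<^sup>L lborel (\<lambda>x. (f x)\<^sup>2)"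
    by (rule integral_completion) simp
qed

lemma L2_functional:
  fixes gg :: "real^'n \<Rightarrow> real" and \<Omega> :: "(real^'n) set"
  assumes gm[measurable]: "gg \<in> borel_measurable lebesgue" and g2: "integrable lebesgue (\<lambda>x. (gg x)\<^sup>2)"
    and \<Omega>b: "bounded \<Omega>" and s0: "0 < s"
  shows L2_functional_int: "\<And>f. f \<in> Hs0 s \<Omega> \<Longrightarrow> integrable lebesgue (\<lambda>x. gg x * f x)"
    and L2_functional_bd: "\<exists>L. \<forall>f\<in>Hs0 s \<Omega>. \<bar>\<integral>x. gg x * f x \<partial>lebesgue\<bar> \<le> L * sqrt (bil (gw s) f f)"
proof -
  have int: "integrable lebesgue (\<lambda>x. gg x * f x)" if f: "f \<in> Hs0 s \<Omega>" for f
  proof -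
    note fl = Hs0_lebesgue[OF f]
    have [measurable]: "f \<in> borel_measurable lebesgue" by (rule fl(1))
    show ?thesis
    proof (rule Bochner_Integration.integrable_bound[where f="\<lambda>x. (gg x)\<^sup>2 + (f x)\<^sup>2"])
      show "integrable lebesgue (\<lambda>x. (gg x)\<^sup>2 + (f x)\<^sup>2)" using g2 fl(2) by simp
      show "(\<lambda>x. gg x * f x) \<in> borel_measurable lebesgue" by measurable
      show "AE x in lebesgue. norm (gg x * f x) \<le> norm ((gg x)\<^sup>2 + (f x)\<^sup>2)"
        using abs_prod_le by auto
    qed
  qed
  then show "\<And>f. f \<in> Hs0 s \<Omega> \<Longrightarrow> integrable lebesgue (\<lambda>x. gg x * f x)" by blast
  obtain P where P: "P > 0" "\<And>f. f \<in> Hs0 s \<Omega> \<Longrightarrow> (\<integral>x. (f x)\<^sup>2 \<partial>lborel) \<le> P * bil (gw s) f f"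
    using poincare[OF \<Omega>b s0] by blast
  define A where "A = (\<integral>x. (gg x)\<^sup>2 \<partial>lebesgue)"
  have A: "0 \<le> A" unfolding A_def by (rule integral_nonneg_AE) auto
  show "\<exists>L. \<forall>f\<in>Hs0 s \<Omega>. \<bar>\<integral>x. gg x * f x \<partial>lebesgue\<bar> \<le> L * sqrt (bil (gw s) f f)"
  proof (intro exI[of _ "sqrt (A * P)"] ballI)
    fix f assume f: "f \<in> Hs0 s \<Omega>"
    note fl = Hs0_lebesgue[OF f]
    define Bf where "Bf = (\<integral>x. (f x)\<^sup>2 \<partial>lebesgue)"
    define X where "X = (\<integral>x. gg x * f x \<partial>lebesgue)"
    have Bf: "0 \<le> Bf" unfolding Bf_def by (rule integral_nonneg_AE) auto
    have "X\<^sup>2 \<le> A * Bf"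
    proof (rule quad_disc)
      fix t
      have "0 \<le> (\<integral>x. (gg x + t * f x)\<^sup>2 \<partial>lebesgue)" by (rule integral_nonneg_AE) auto
      also have "(\<integral>x. (gg x + t * f x)\<^sup>2 \<partial>lebesgue) =
          (\<integral>x. (gg x)\<^sup>2 + (2 * t) * (gg x * f x) + t\<^sup>2 * (f x)\<^sup>2 \<partial>lebesgue)"
        by (intro Bochner_Integration.integral_cong) (auto simp: power2_eq_square algebra_simps)
      also have "\<dots> = A + 2 * t * X + t\<^sup>2 * Bf"
        using g2 int[OF f] fl(2) unfolding A_def X_def Bf_def by simp
      finally show "0 \<le> A + 2 * t * X + t\<^sup>2 * Bf" .
    qed (rule Bf)
    moreover have "Bf \<le> P * bil (gw s) f f" unfolding Bf_def using fl(3) P(2)[OF f] by simp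
    ultimately have "X\<^sup>2 \<le> A * (P * bil (gw s) f f)"
      using A by (meson mult_left_mono order_trans)
    then have "sqrt (X\<^sup>2) \<le> sqrt (A * (P * bil (gw s) f f))" by (rule real_sqrt_le_mono)
    then show "\<bar>X\<bar> \<le> sqrt (A * P) * sqrt (bil (gw s) f f)"
      by (simp add: real_sqrt_mult mult.assoc)
  qed
qed

lemma bil_le:
  fixes f :: "real^'n \<Rightarrow> real"
  assumes W: "adm s W" and W': "adm s W'" and f: "f \<in> Hs0 s \<Omega>"
    and le: "\<And>x y. x \<noteq> y \<Longrightarrow> W x y \<le> C * W' x y"
  shows "bil W f f \<le> C * bil W' f f"
proof -
  obtain C' where C': "\<And>x y. x \<noteq> y \<Longrightarrow> 0 \<le> W' x y \<and> W' x y \<le> C' * gw s x y"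
    using W' unfolding adm_def by blast
  have "bil W f f \<le> integral\<^sup>L (lborel \<Otimes>\<^sub>M lborel) (\<lambda>z. C * (\<lambda>(x,y). (f x - f y) * (f x - f y) * W' x y) z)"
    unfolding bil_def
  proof (rule integral_mono)
    show "integrable (lborel \<Otimes>\<^sub>M lborel) (\<lambda>(x,y). (f x - f y) * (f x - f y) * W x y)"
      by (rule bil_integrable[OF W f f])
    show "integrable (lborel \<Otimes>\<^sub>M lborel) (\<lambda>z. C * (\<lambda>(x,y). (f x - f y) * (f x - f y) * W' x y) z)"
      using bil_integrable[OF W' f f] by simp
    fix z :: "(real^'n) \<times> (real^'n)"
    obtain x y where z: "z = (x, y)" by (cases z)
    show "(\<lambda>(x,y). (f x - f y) * (f x - f y) * W x y) z \<le> C * (\<lambda>(x,y). (f x - f y) * (f x - f y) * W' x y) z"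
    proof (cases "x = y")
      case True then show ?thesis using z by simp
    next
      case False
      have "(f x - f y) * (f x - f y) * W x y \<le> (f x - f y) * (f x - f y) * (C * W' x y)"
        using le[OF False] by (intro mult_left_mono) auto
      then show ?thesis using z by (simp add: algebra_simps)
    qed
  qed
  also have "\<dots> = C * bil W' f f" unfolding bil_def by simp
  finally show ?thesis .
qed



lemma weak_functional:
  fixes \<Omega> :: "(real^'n) set" and lf :: "(real^'n \<Rightarrow> real) \<Rightarrow> real"
  assumes \<Omega>b: "bounded \<Omega>" and s: "0 < s" "s < 1"
    and ladd: "\<And>f g. f \<in> Hs0 s \<Omega> \<Longrightarrow> g \<in> Hs0 s \<Omega> \<Longrightarrow> lf (\<lambda>x. f x + g x) = lf f + lf g"
    and lscale: "\<And>f c. f \<in> Hs0 s \<Omega> \<Longrightarrow> lf (\<lambda>x. c * f x) = c * lf f"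
    and lbd: "\<And>f. f \<in> Hs0 s \<Omega> \<Longrightarrow> \<bar>lf f\<bar> \<le> L * sqrt (bil (gw s) f f)"
    and conv: "weak_conv_Hs0 s \<Omega> uk u"
  shows "(\<lambda>k. lf (uk k)) \<longlonglongrightarrow> lf u"
proof -
  obtain v where v: "v \<in> Hs0 s \<Omega>" "\<And>w. w \<in> Hs0 s \<Omega> \<Longrightarrow> lf w = bil (gw s) w v"
    using riesz[OF \<Omega>b s(1) ladd lscale lbd] by blast
  define cc where "cc = cns CARD('n) s"
  have cc: "0 < cc" unfolding cc_def using cns_pos[OF s] .
  define v' where "v' = (\<lambda>x. (1 / cc) * v x)"
  have v': "v' \<in> Hs0 s \<Omega>" unfolding v'_def by (rule Hs0_scale[OF v(1)])
  have eq: "hs_inner s w v' = lf w" if "w \<in> Hs0 s \<Omega>" for w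
    unfolding hs_inner_bil v'_def bil_scale2 cc_def[symmetric] using cc v(2)[OF that] by simp
  have uH: "u \<in> Hs0 s \<Omega>" and ukH: "\<And>k. uk k \<in> Hs0 s \<Omega>"
    and wc: "(\<lambda>k. hs_inner s (uk k) v') \<longlonglongrightarrow> hs_inner s u v'"
    using conv v' unfolding weak_conv_Hs0_def by auto
  then show ?thesis using eq by simp
qed



theorem lemma2p6:
  fixes \<Omega> :: "(real ^ 'n) set"
    and K :: "real ^ 'n \<Rightarrow> real ^ 'n \<Rightarrow> real"
    and h :: "real \<Rightarrow> real"
    and \<eta> \<zeta> u :: "real ^ 'n \<Rightarrow> real"
    and uk :: "nat \<Rightarrow> real ^ 'n \<Rightarrow> real"
    and s c C :: real and \<rho> :: ereal
  assumes s: "0 < s" "s < 1"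
    and \<Omega>: "open \<Omega>" "bounded \<Omega>" "lipschitz_boundary \<Omega>"
    and Kmeas: "(\<lambda>(x, z). K x z) \<in> borel_measurable (lborel \<Otimes>\<^sub>M lborel)"
    and Ksym: "\<And>x z. K x z = K z x"
    and cC: "c > 0" "C > 0" "\<rho> > 0"
    and Klow: "\<And>x z. x \<noteq> z \<Longrightarrow>
        c * indicator {t. ereal t < \<rho>} (dist x z) / dist x z powr (real CARD('n) + 2 * s) \<le> K x z"
    and Kup: "\<And>x z. x \<noteq> z \<Longrightarrow> K x z \<le> C / dist x z powr (real CARD('n) + 2 * s)"
    and h: "continuous_on UNIV h" "\<And>t. h (- t) = - h t" "strict_mono h"
    and \<eta>: "set_borel_measurable lebesgue \<Omega> \<eta>"
       "\<exists>M. AE x in lebesgue. x \<in> \<Omega> \<longrightarrow> 0 \<le> \<eta> x \<and> \<eta> x \<le> M"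
    and \<zeta>: "set_borel_measurable lebesgue \<Omega> \<zeta>" "set_integrable lebesgue \<Omega> (\<lambda>x. (\<zeta> x)\<^sup>2)"
    and conv: "weak_conv_Hs0 s \<Omega> uk u"
  shows "liminf (\<lambda>k. Jfun \<Omega> K h \<eta> \<zeta> (uk k)) \<ge> Jfun \<Omega> K h \<eta> \<zeta> u"
proof -
  have uH: "u \<in> Hs0 s \<Omega>" and ukH: "\<And>k. uk k \<in> Hs0 s \<Omega>"
    using conv unfolding weak_conv_Hs0_def by auto
  have Kb: "0 \<le> K x z \<and> K x z \<le> C * gw s x z" if xz: "x \<noteq> z" for x z
  proof -
    have dpos: "0 < dist x z powr (real CARD('n) + 2 * s)" using xz by simp
    have "0 \<le> c * indicator {t. ereal t < \<rho>} (dist x z) / dist x z powr (real CARD('n) + 2 * s)"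
      using cC dpos by simp
    then show ?thesis using Klow[OF xz] Kup[OF xz] unfolding gw_def by simp
  qed
  have admK: "adm s K" unfolding adm_def using Kmeas Kb by blast
  have hm: "mono h" using h(3) by (rule strict_mono_mono)
  have h0: "h 0 = 0" using h(2)[of 0] by simp
  have Hnn: "0 \<le> primH h t" for t by (rule primH_nonneg[OF h(1) hm h0])
  have hB[measurable]: "h \<in> borel_measurable borel" by (rule borel_measurable_continuous_onI[OF h(1)])
  have HB[measurable]: "primH h \<in> borel_measurable borel"
    by (rule borel_measurable_continuous_onI[OF primH_cont[OF h(1)]])
  have hMnn: "0 \<le> h M" if "0 \<le> M" for M using monoD[OF hm that] h0 by simp
  have hbd: "\<bar>h t\<bar> \<le> h M" if "\<bar>t\<bar> \<le> M" for t M
  proof -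
    have "h (- M) \<le> h t" "h t \<le> h M" using monoD[OF hm] that by auto
    then show ?thesis using h(2)[of M] by auto
  qed
  have Hbd: "primH h t \<le> M * h M" if "\<bar>t\<bar> \<le> M" for t M
  proof -
    have "primH h t \<le> t * h t" by (rule primH_le[OF h(1) hm])
    also have "\<dots> \<le> \<bar>t\<bar> * \<bar>h t\<bar>" by (simp add: abs_mult[symmetric])
    also have "\<dots> \<le> M * h M" using that hbd[OF that] by (intro mult_mono) auto
    finally show ?thesis .
  qed
  have um[measurable]: "u \<in> borel_measurable lebesgue" by (rule Hs0_lebesgue(1)[OF uH])
  have ukm[measurable]: "uk k \<in> borel_measurable lebesgue" for k by (rule Hs0_lebesgue(1)[OF ukH])
  have \<eta>m[measurable]: "(\<lambda>x. indicator \<Omega> x * \<eta> x) \<in> borel_measurable lebesgue"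
    using \<eta>(1) unfolding set_borel_measurable_def by simp
  define \<zeta>\<Omega> where "\<zeta>\<Omega> x = indicator \<Omega> x * \<zeta> x" for x
  have \<zeta>m[measurable]: "\<zeta>\<Omega> \<in> borel_measurable lebesgue"
    using \<zeta>(1) unfolding set_borel_measurable_def \<zeta>\<Omega>_def by simp
  have \<zeta>2: "integrable lebesgue (\<lambda>x. (\<zeta>\<Omega> x)\<^sup>2)"
  proof -
    have "integrable lebesgue (\<lambda>x. indicator \<Omega> x * (\<zeta> x)\<^sup>2)"
      using \<zeta>(2) unfolding set_integrable_def by simp
    moreover have "indicator \<Omega> x * (\<zeta> x)\<^sup>2 = (\<zeta>\<Omega> x)\<^sup>2" for x
      unfolding \<zeta>\<Omega>_def by (auto simp: indicator_def)
    ultimately show ?thesis by simp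
  qed
  have \<Omega>sets: "\<Omega> \<in> sets lebesgue" using \<Omega>(1) by simp
  have \<Omega>fin: "emeasure lebesgue \<Omega> < \<infinity>"
    using emeasure_bounded_finite[OF \<Omega>(2)] \<Omega>(1) by simp
  obtain M0 where M0: "AE x in lebesgue. x \<in> \<Omega> \<longrightarrow> 0 \<le> \<eta> x \<and> \<eta> x \<le> M0" using \<eta>(2) by blast
  define \<eta>H where "\<eta>H f x = indicator \<Omega> x * \<eta> x * primH h (f x)" for f x
  have Jeq: "Jfun \<Omega> K h \<eta> \<zeta> f = (if integrable lebesgue (\<eta>H f)
      then ereal (bil K f f / 4 + integral\<^sup>L lebesgue (\<eta>H f) - (\<integral>x. \<zeta>\<Omega> x * f x \<partial>lebesgue)) else \<infinity>)" for f
  proof -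
    have e1: "(\<lambda>x. indicator \<Omega> x *\<^sub>R (\<eta> x * primH h (f x))) = \<eta>H f"
      by (auto simp: fun_eq_iff \<eta>H_def)
    have e2: "(\<lambda>x. indicator \<Omega> x *\<^sub>R (\<zeta> x * f x)) = (\<lambda>x. \<zeta>\<Omega> x * f x)"
      by (auto simp: fun_eq_iff \<zeta>\<Omega>_def)
    have e3: "integral\<^sup>L (lborel \<Otimes>\<^sub>M lborel) (\<lambda>(x, z). \<bar>f x - f z\<bar>\<^sup>2 * K x z) = bil K f f"
      unfolding bil_def by (rule Bochner_Integration.integral_cong) (auto simp: power2_eq_square)
    show ?thesis unfolding Jfun_def set_integrable_def set_lebesgue_integral_def e1 e2 e3 by simp
  qed

  define gM where "gM M x = indicator \<Omega> x * \<eta> x * (if \<bar>u x\<bar> \<le> real M then h (u x) else 0)" for M :: nat and x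
  define TM where "TM M x = indicator \<Omega> x * \<eta> x * (if \<bar>u x\<bar> \<le> real M then primH h (u x) else 0)" for M :: nat and x
  have gMm[measurable]: "gM M \<in> borel_measurable lebesgue" for M unfolding gM_def by measurable
  have TMm[measurable]: "TM M \<in> borel_measurable lebesgue" for M unfolding TM_def by measurable
  have \<eta>bd: "\<bar>\<eta> x\<bar> \<le> M0" "0 \<le> \<eta> x" "0 \<le> M0" if "x \<in> \<Omega>" "x \<in> \<Omega> \<longrightarrow> 0 \<le> \<eta> x \<and> \<eta> x \<le> M0" for x
    using that by auto
  have gM2: "integrable lebesgue (\<lambda>x. (gM M x)\<^sup>2)" for M
  proof (rule Bochner_Integration.integrable_bound[where f="\<lambda>x. (M0 * h (real M))\<^sup>2 * indicator \<Omega> x"])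
    show "integrable lebesgue (\<lambda>x. (M0 * h (real M))\<^sup>2 * indicator \<Omega> x)"
      using \<Omega>sets \<Omega>fin by (intro Bochner_Integration.integrable_mult_right) simp
    show "(\<lambda>x. (gM M x)\<^sup>2) \<in> borel_measurable lebesgue" by measurable
    show "AE x in lebesgue. norm ((gM M x)\<^sup>2) \<le> norm ((M0 * h (real M))\<^sup>2 * indicator \<Omega> x)"
      using M0
    proof eventually_elim
      case (elim x)
      show ?case
      proof (cases "x \<in> \<Omega>")
        case True
        note e = \<eta>bd[OF True elim]
        have b: "\<bar>if \<bar>u x\<bar> \<le> real M then h (u x) else 0\<bar> \<le> h (real M)"
          using hbd[of "u x" "real M"] hMnn[of "real M"] by auto
        have "\<bar>gM M x\<bar> = \<bar>\<eta> x\<bar> * \<bar>if \<bar>u x\<bar> \<le> real M then h (u x) else 0\<bar>"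
          using True by (simp add: gM_def abs_mult)
        also have "\<dots> \<le> M0 * h (real M)" using e b by (intro mult_mono) auto
        finally have "\<bar>gM M x\<bar> \<le> \<bar>M0 * h (real M)\<bar>" by simp
        then have "(gM M x)\<^sup>2 \<le> (M0 * h (real M))\<^sup>2" by (simp add: abs_le_square_iff)
        then show ?thesis using True by simp
      next
        case False then show ?thesis by (simp add: gM_def)
      qed
    qed
  qed
  have TMint: "integrable lebesgue (TM M)" for M
  proof (rule Bochner_Integration.integrable_bound[where f="\<lambda>x. (M0 * (real M * h (real M))) * indicator \<Omega> x"])
    show "integrable lebesgue (\<lambda>x. (M0 * (real M * h (real M))) * indicator \<Omega> x)"
      using \<Omega>sets \<Omega>fin by (intro Bochner_Integration.integrable_mult_right) simp
    show "TM M \<in> borel_measurable lebesgue" by measurable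
    show "AE x in lebesgue. norm (TM M x) \<le> norm ((M0 * (real M * h (real M))) * indicator \<Omega> x)"
      using M0
    proof eventually_elim
      case (elim x)
      show ?case
      proof (cases "x \<in> \<Omega>")
        case True
        note e = \<eta>bd[OF True elim]
        have b: "\<bar>if \<bar>u x\<bar> \<le> real M then primH h (u x) else 0\<bar> \<le> real M * h (real M)"
          using Hbd[of "u x" "real M"] Hnn[of "u x"] hMnn[of "real M"] by auto
        have "\<bar>TM M x\<bar> = \<bar>\<eta> x\<bar> * \<bar>if \<bar>u x\<bar> \<le> real M then primH h (u x) else 0\<bar>"
          using True by (simp add: TM_def abs_mult)
        also have "\<dots> \<le> M0 * (real M * h (real M))" using e b by (intro mult_mono) auto
        finally show ?thesis using True e hMnn[of "real M"] by simp
      next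
        case False then show ?thesis by (simp add: TM_def)
      qed
    qed
  qed
  define lM where "lM M f = bil K u f / 2 + (\<integral>x. gM M x * f x \<partial>lebesgue) - (\<integral>x. \<zeta>\<Omega> x * f x \<partial>lebesgue)"
    for M :: nat and f :: "real^'n \<Rightarrow> real"
  have intg: "integrable lebesgue (\<lambda>x. gM M x * f x)" if "f \<in> Hs0 s \<Omega>" for M f
    by (rule L2_functional_int[OF gMm gM2 \<Omega>(2) s(1) that])
  have intz: "integrable lebesgue (\<lambda>x. \<zeta>\<Omega> x * f x)" if "f \<in> Hs0 s \<Omega>" for f
    by (rule L2_functional_int[OF \<zeta>m \<zeta>2 \<Omega>(2) s(1) that])
  obtain Lz where Lz: "\<And>f. f \<in> Hs0 s \<Omega> \<Longrightarrow> \<bar>\<integral>x. \<zeta>\<Omega> x * f x \<partial>lebesgue\<bar> \<le> Lz * sqrt (bil (gw s) f f)"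
    using L2_functional_bd[OF \<zeta>m \<zeta>2 \<Omega>(2) s(1)] by blast
  have Kbd: "\<bar>bil K u f\<bar> \<le> sqrt (bil K u u) * sqrt C * sqrt (bil (gw s) f f)" if f: "f \<in> Hs0 s \<Omega>" for f
  proof -
    have "\<bar>bil K u f\<bar> \<le> sqrt (bil K u u) * sqrt (bil K f f)" by (rule bil_abs_le[OF admK uH f])
    also have "\<dots> \<le> sqrt (bil K u u) * sqrt (C * bil (gw s) f f)"
      using bil_le[OF admK adm_gw f, of C] Kb bil_nonneg[OF admK, of u] by (intro mult_left_mono real_sqrt_le_mono) auto
    finally show ?thesis by (simp add: real_sqrt_mult mult.assoc)
  qed
  have lMconv: "(\<lambda>k. lM M (uk k)) \<longlonglongrightarrow> lM M u" for M
  proof -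
    obtain Lg where Lg: "\<And>f. f \<in> Hs0 s \<Omega> \<Longrightarrow> \<bar>\<integral>x. gM M x * f x \<partial>lebesgue\<bar> \<le> Lg * sqrt (bil (gw s) f f)"
      using L2_functional_bd[OF gMm gM2 \<Omega>(2) s(1)] by blast
    show ?thesis
    proof (rule weak_functional[OF \<Omega>(2) s _ _ _ conv])
      fix f g assume f: "f \<in> Hs0 s \<Omega>" and g: "g \<in> Hs0 s \<Omega>"
      have "(\<integral>x. gM M x * (f x + g x) \<partial>lebesgue) = (\<integral>x. gM M x * f x + gM M x * g x \<partial>lebesgue)"
        by (simp add: algebra_simps)
      also have "\<dots> = (\<integral>x. gM M x * f x \<partial>lebesgue) + (\<integral>x. gM M x * g x \<partial>lebesgue)"
        by (rule Bochner_Integration.integral_add[OF intg[OF f] intg[OF g]])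
      finally have 1: "(\<integral>x. gM M x * (f x + g x) \<partial>lebesgue) = (\<integral>x. gM M x * f x \<partial>lebesgue) + (\<integral>x. gM M x * g x \<partial>lebesgue)" .
      have "(\<integral>x. \<zeta>\<Omega> x * (f x + g x) \<partial>lebesgue) = (\<integral>x. \<zeta>\<Omega> x * f x + \<zeta>\<Omega> x * g x \<partial>lebesgue)"
        by (simp add: algebra_simps)
      also have "\<dots> = (\<integral>x. \<zeta>\<Omega> x * f x \<partial>lebesgue) + (\<integral>x. \<zeta>\<Omega> x * g x \<partial>lebesgue)"
        by (rule Bochner_Integration.integral_add[OF intz[OF f] intz[OF g]])
      finally have 2: "(\<integral>x. \<zeta>\<Omega> x * (f x + g x) \<partial>lebesgue) = (\<integral>x. \<zeta>\<Omega> x * f x \<partial>lebesgue) + (\<integral>x. \<zeta>\<Omega> x * g x \<partial>lebesgue)" .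
      show "lM M (\<lambda>x. f x + g x) = lM M f + lM M g"
        unfolding lM_def 1 2 bil_add2[OF admK f g uH] by (simp add: field_simps)
    next
      fix f and cc :: real assume f: "f \<in> Hs0 s \<Omega>"
      have 1: "(\<integral>x. gM M x * (cc * f x) \<partial>lebesgue) = cc * (\<integral>x. gM M x * f x \<partial>lebesgue)"
        by (simp add: algebra_simps)
      have 2: "(\<integral>x. \<zeta>\<Omega> x * (cc * f x) \<partial>lebesgue) = cc * (\<integral>x. \<zeta>\<Omega> x * f x \<partial>lebesgue)"
        by (simp add: algebra_simps)
      show "lM M (\<lambda>x. cc * f x) = cc * lM M f"
        unfolding lM_def 1 2 bil_scale2 by (simp add: field_simps)
    next
      fix f assume f: "f \<in> Hs0 s \<Omega>"
      have "\<bar>lM M f\<bar> \<le> \<bar>bil K u f\<bar> / 2 + \<bar>\<integral>x. gM M x * f x \<partial>lebesgue\<bar> + \<bar>\<integral>x. \<zeta>\<Omega> x * f x \<partial>lebesgue\<bar>"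
        unfolding lM_def by linarith
      also have "\<dots> \<le> (sqrt (bil K u u) * sqrt C * sqrt (bil (gw s) f f)) / 2 + Lg * sqrt (bil (gw s) f f) + Lz * sqrt (bil (gw s) f f)"
        using Kbd[OF f] Lg[OF f] Lz[OF f] by linarith
      also have "\<dots> = (sqrt (bil K u u) * sqrt C / 2 + Lg + Lz) * sqrt (bil (gw s) f f)"
        by (simp add: algebra_simps)
      finally show "\<bar>lM M f\<bar> \<le> (sqrt (bil K u u) * sqrt C / 2 + Lg + Lz) * sqrt (bil (gw s) f f)" .
    qed
  qed

  define cM where "cM M = bil K u u / 4 + integral\<^sup>L lebesgue (TM M) - (\<integral>x. \<zeta>\<Omega> x * u x \<partial>lebesgue)" for M :: nat
  have key: "ereal (cM M + (lM M (uk k) - lM M u)) \<le> Jfun \<Omega> K h \<eta> \<zeta> (uk k)" for M k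
  proof (cases "integrable lebesgue (\<eta>H (uk k))")
    case False then show ?thesis unfolding Jeq by simp
  next
    case True
    define d where "d = (\<lambda>x. uk k x - u x)"
    have dH: "d \<in> Hs0 s \<Omega>" unfolding d_def by (rule Hs0_diff[OF ukH uH])
    have uk_eq: "uk k = (\<lambda>x. u x + 1 * d x)" unfolding d_def by auto
    have q1: "bil K (uk k) (uk k) = bil K u u + 2 * bil K u d + bil K d d"
      using bil_expand[OF admK uH dH, of 1] uk_eq by simp
    have q2: "bil K u d = bil K u (uk k) - bil K u u" unfolding d_def by (rule bil_diff2[OF admK ukH uH uH])
    have q3: "0 \<le> bil K d d" by (rule bil_nonneg[OF admK])
    have i1: "integral\<^sup>L lebesgue (TM M) + (\<integral>x. gM M x * d x \<partial>lebesgue) \<le> integral\<^sup>L lebesgue (\<eta>H (uk k))"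
    proof -
      have "integral\<^sup>L lebesgue (TM M) + (\<integral>x. gM M x * d x \<partial>lebesgue) = (\<integral>x. TM M x + gM M x * d x \<partial>lebesgue)"
        by (rule Bochner_Integration.integral_add[symmetric, OF TMint intg[OF dH]])
      also have "\<dots> \<le> integral\<^sup>L lebesgue (\<eta>H (uk k))"
      proof (rule integral_mono_AE)
        show "integrable lebesgue (\<lambda>x. TM M x + gM M x * d x)"
          using TMint intg[OF dH] by (rule Bochner_Integration.integrable_add)
        show "integrable lebesgue (\<eta>H (uk k))" by (rule True)
        show "AE x in lebesgue. TM M x + gM M x * d x \<le> \<eta>H (uk k) x"
          using M0
        proof eventually_elim
          case (elim x)
          show ?case
          proof (cases "x \<in> \<Omega>")
            case False then show ?thesis by (simp add: TM_def gM_def \<eta>H_def)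
          next
            case True
            have e: "0 \<le> \<eta> x" using elim True by auto
            have "(if \<bar>u x\<bar> \<le> real M then primH h (u x) + h (u x) * d x else 0) \<le> primH h (uk k x)"
              using primH_convex[OF h(1) hm, of "u x" "uk k x"] Hnn[of "uk k x"] unfolding d_def by auto
            then have "\<eta> x * (if \<bar>u x\<bar> \<le> real M then primH h (u x) + h (u x) * d x else 0) \<le> \<eta> x * primH h (uk k x)"
              using e by (rule mult_left_mono)
            then show ?thesis using True by (auto simp: TM_def gM_def \<eta>H_def algebra_simps split: if_splits)
          qed
        qed
      qed
      finally show ?thesis .
    qed
    have i2: "(\<integral>x. gM M x * d x \<partial>lebesgue) = (\<integral>x. gM M x * uk k x \<partial>lebesgue) - (\<integral>x. gM M x * u x \<partial>lebesgue)"
      unfolding d_def right_diff_distrib by (rule Bochner_Integration.integral_diff[OF intg[OF ukH] intg[OF uH]])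
    have R: "cM M + (lM M (uk k) - lM M u) \<le> bil K (uk k) (uk k) / 4 + integral\<^sup>L lebesgue (\<eta>H (uk k)) - (\<integral>x. \<zeta>\<Omega> x * uk k x \<partial>lebesgue)"
      unfolding cM_def lM_def using q1 q2 q3 i1 i2 by linarith
    show ?thesis using True R by (simp add: Jeq)
  qed
  have liminf_ge: "ereal (cM M) \<le> liminf (\<lambda>k. Jfun \<Omega> K h \<eta> \<zeta> (uk k))" for M
  proof -
    have "(\<lambda>k. ereal (cM M + (lM M (uk k) - lM M u))) \<longlonglongrightarrow> ereal (cM M + (lM M u - lM M u))"
      by (intro tendsto_intros lMconv)
    then have "liminf (\<lambda>k. ereal (cM M + (lM M (uk k) - lM M u))) = ereal (cM M)"
      by (simp add: lim_imp_Liminf)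
    moreover have "liminf (\<lambda>k. ereal (cM M + (lM M (uk k) - lM M u))) \<le> liminf (\<lambda>k. Jfun \<Omega> K h \<eta> \<zeta> (uk k))"
      by (intro Liminf_mono) (simp add: key)
    ultimately show ?thesis by simp
  qed
  have TMnn: "AE x in lebesgue. 0 \<le> TM M x" for M
    using M0 by eventually_elim (auto simp: TM_def Hnn)
  show ?thesis
  proof (cases "integrable lebesgue (\<eta>H u)")
    case True
    have "(\<lambda>M. integral\<^sup>L lebesgue (TM M)) \<longlonglongrightarrow> integral\<^sup>L lebesgue (\<eta>H u)"
    proof (rule integral_dominated_convergence[where w="\<lambda>x. \<bar>\<eta>H u x\<bar>"])
      show "\<eta>H u \<in> borel_measurable lebesgue" using True by (rule borel_measurable_integrable)
      show "TM M \<in> borel_measurable lebesgue" for M by measurable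
      show "integrable lebesgue (\<lambda>x. \<bar>\<eta>H u x\<bar>)" using True by (rule Bochner_Integration.integrable_abs)
      show "AE x in lebesgue. (\<lambda>M. TM M x) \<longlonglongrightarrow> \<eta>H u x"
      proof (rule AE_I2)
        fix x
        obtain N :: nat where N: "\<bar>u x\<bar> \<le> real N" using real_arch_simple by blast
        have "\<forall>M\<ge>N. TM M x = \<eta>H u x"
        proof (intro allI impI)
          fix M assume "N \<le> M"
          then have "\<bar>u x\<bar> \<le> real M" using N by linarith
          then show "TM M x = \<eta>H u x" by (simp add: TM_def \<eta>H_def)
        qed
        then show "(\<lambda>M. TM M x) \<longlonglongrightarrow> \<eta>H u x"
          by (intro tendsto_eventually) (auto simp: eventually_sequentially)
      qed
      show "AE x in lebesgue. norm (TM M x) \<le> \<bar>\<eta>H u x\<bar>" for M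
        by (intro AE_I2) (auto simp: TM_def \<eta>H_def abs_mult)
    qed
    then have "(\<lambda>M. ereal (cM M)) \<longlonglongrightarrow> ereal (bil K u u / 4 + integral\<^sup>L lebesgue (\<eta>H u) - (\<integral>x. \<zeta>\<Omega> x * u x \<partial>lebesgue))"
      unfolding cM_def by (intro tendsto_intros)
    then have "ereal (bil K u u / 4 + integral\<^sup>L lebesgue (\<eta>H u) - (\<integral>x. \<zeta>\<Omega> x * u x \<partial>lebesgue))
        \<le> liminf (\<lambda>k. Jfun \<Omega> K h \<eta> \<zeta> (uk k))"
      by (rule LIMSEQ_le_const2) (use liminf_ge in auto)
    then show ?thesis using True by (simp add: Jeq)
  next
    case False
    have \<eta>Hnn: "AE x in lebesgue. 0 \<le> \<eta>H u x"
      using M0 by eventually_elim (auto simp: \<eta>H_def Hnn)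
    have \<eta>Hm[measurable]: "\<eta>H u \<in> borel_measurable lebesgue" unfolding \<eta>H_def by measurable
    have inf: "(\<integral>\<^sup>+x. ennreal (\<eta>H u x) \<partial>lebesgue) = \<infinity>"
    proof (rule ccontr)
      assume "(\<integral>\<^sup>+x. ennreal (\<eta>H u x) \<partial>lebesgue) \<noteq> \<infinity>"
      then have "integrable lebesgue (\<eta>H u)"
        using \<eta>Hnn by (intro integrableI_nonneg) (auto simp: top.not_eq_extremum)
      then show False using False by simp
    qed
    have "(\<lambda>M. \<integral>\<^sup>+x. ennreal (TM M x) \<partial>lebesgue) \<longlonglongrightarrow> (\<integral>\<^sup>+x. ennreal (\<eta>H u x) \<partial>lebesgue)"
    proof (rule nn_integral_LIMSEQ)
      show "incseq (\<lambda>M x. ennreal (TM M x))"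
      proof (intro incseq_SucI le_funI)
        fix M x
        define e where "e = indicator \<Omega> x * \<eta> x"
        have F: "(if \<bar>u x\<bar> \<le> real M then primH h (u x) else 0) \<le> (if \<bar>u x\<bar> \<le> real (Suc M) then primH h (u x) else 0)"
          using Hnn[of "u x"] by auto
        show "ennreal (TM M x) \<le> ennreal (TM (Suc M) x)"
        proof (cases "0 \<le> e")
          case True
          then have "TM M x \<le> TM (Suc M) x" unfolding TM_def e_def[symmetric] using F by (intro mult_left_mono)
          then show ?thesis by (rule ennreal_leI)
        next
          case False
          then have "TM M x \<le> 0" unfolding TM_def e_def[symmetric] using Hnn[of "u x"]
            by (auto intro: mult_nonpos_nonneg)
          then have "ennreal (TM M x) = 0" using ennreal_eq_0_iff by blast
          then show ?thesis by simp
        qed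
      qed
      show "(\<lambda>x. ennreal (TM M x)) \<in> borel_measurable lebesgue" for M by measurable
      fix x
      obtain N :: nat where N: "\<bar>u x\<bar> \<le> real N" using real_arch_simple by blast
      have "\<forall>M\<ge>N. ennreal (TM M x) = ennreal (\<eta>H u x)"
      proof (intro allI impI)
        fix M assume "N \<le> M"
        then have "\<bar>u x\<bar> \<le> real M" using N by linarith
        then show "ennreal (TM M x) = ennreal (\<eta>H u x)" by (simp add: TM_def \<eta>H_def)
      qed
      then show "(\<lambda>M. ennreal (TM M x)) \<longlonglongrightarrow> ennreal (\<eta>H u x)"
        by (intro tendsto_eventually) (auto simp: eventually_sequentially)
    qed
    moreover have "(\<integral>\<^sup>+x. ennreal (TM M x) \<partial>lebesgue) = ennreal (integral\<^sup>L lebesgue (TM M))" for M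
      by (rule nn_integral_eq_integral[OF TMint TMnn])
    ultimately have "(\<lambda>M. ennreal (integral\<^sup>L lebesgue (TM M))) \<longlonglongrightarrow> top" using inf by simp
    then have "filterlim (\<lambda>M. integral\<^sup>L lebesgue (TM M)) at_top sequentially"
      by (simp add: ennreal_tendsto_top_eq_at_top)
    then have "filterlim (\<lambda>M. (bil K u u / 4 - (\<integral>x. \<zeta>\<Omega> x * u x \<partial>lebesgue)) + integral\<^sup>L lebesgue (TM M)) at_top sequentially"
      by (intro filterlim_tendsto_add_at_top[OF tendsto_const])
    then have "filterlim cM at_top sequentially"
      unfolding cM_def by (simp add: algebra_simps)
    then have "(\<lambda>M. ereal (cM M)) \<longlonglongrightarrow> \<infinity>" by (simp add: tendsto_PInfty_eq_at_top)
    then have "\<infinity> \<le> liminf (\<lambda>k. Jfun \<Omega> K h \<eta> \<zeta> (uk k))"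
      by (rule LIMSEQ_le_const2) (use liminf_ge in auto)
    then show ?thesis using False by (simp add: Jeq)
  qed
qed


end
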